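(* Let $V$ be a finite-dimensional real Banach space. Then \[ \mathcal{LE}(V)=\mathcal{PC}(V)=\mathcal{LE}_c(V)=\mathcal{LE}_f(V). \]
   Context: For a function $f$ from a subset $X$ of a metric space $(Z,\rho)$ into a Banach space $V$, its Lipschitz constant is $L(f)=\sup\{\|f(x)-f(y)\|/\rho(x,y): x,y\in X,\ x\neq y\}$ (possibly $+\infty$). The Lipschitz extension constant $\mathcal{LE}(V)$ is the infimum of the constants $c$ such that for every metric space $(Z,\rho)$, every subset $X\subseteq Z$ and every function $f:X\to V$, there is an extension $g:Z\to V$ of $f$ with $L(g)\le cL(f)$ (and $\mathcal{LE}(V)=+\infty$ if no such $c$ exists). $\mathcal{LE}_c(V)$ is defined in the same way but using only compact metric spaces $Z$, and $\mathcal{LE}_f(V)$ using only finite metric spaces $Z$. The projection constant $\mathcal{PC}(V)$ is the infimum of the constants $c$ such that for every Banach space $W$ into which $V$ is isometrically (linearly) embedded there is a linear projection $P$ of $W$ onto $V$ with $\|P\|\le c$ ($+\infty$ if no such $c$ exists). *)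

theory Defs
  imports "HOL-Analysis.Analysis"
begin

definition lip_const :: "'z set \<Rightarrow> ('z \<Rightarrow> 'z \<Rightarrow> real) \<Rightarrow> ('z \<Rightarrow> 'v::real_normed_vector) \<Rightarrow> ereal" where
  "lip_const X \<rho> f =
     Sup (insert 0 {ereal (norm (f x - f y) / \<rho> x y) | x y. x \<in> X \<and> y \<in> X \<and> x \<noteq> y})"

definition LE_admissible :: "('z set \<Rightarrow> ('z \<Rightarrow> 'z \<Rightarrow> real) \<Rightarrow> bool) \<Rightarrow> real \<Rightarrow> 'v::real_normed_vector itself \<Rightarrow> bool" where
  "LE_admissible P c _ \<longleftrightarrow>
     (\<forall>Z \<rho> X (f :: 'z \<Rightarrow> 'v). Metric_space Z \<rho> \<and> P Z \<rho> \<and> X \<subseteq> Z \<longrightarrow>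
        (\<exists>g :: 'z \<Rightarrow> 'v. (\<forall>x\<in>X. g x = f x) \<and> lip_const Z \<rho> g \<le> ereal c * lip_const X \<rho> f))"

definition LE_const_on :: "('z set \<Rightarrow> ('z \<Rightarrow> 'z \<Rightarrow> real) \<Rightarrow> bool) \<Rightarrow> 'v::real_normed_vector itself \<Rightarrow> ereal" where
  "LE_const_on P V = Inf (ereal ` {c. 0 \<le> c \<and> LE_admissible P c V})"

text \<open>LE restricted to metric spaces whose points lie in the type 'z.
  The true LE(V) is the supremum of these over all types 'z.\<close>
definition LE_type :: "'z itself \<Rightarrow> 'v::real_normed_vector itself \<Rightarrow> ereal" where
  "LE_type _ V = LE_const_on (\<lambda>(Z::'z set) \<rho>. True) V"

text \<open>LE_f: finite metric spaces (every finite metric space is isometric to one whose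
  carrier is a finite set of naturals).\<close>
definition LE_f :: "'v::real_normed_vector itself \<Rightarrow> ereal" where
  "LE_f V = LE_const_on (\<lambda>(Z::nat set) \<rho>. finite Z) V"

text \<open>LE_c: compact metric spaces (every compact metric space has cardinality at most
  that of the continuum, hence is isometric to one with carrier a set of reals).\<close>
definition LE_c :: "'v::real_normed_vector itself \<Rightarrow> ereal" where
  "LE_c V = LE_const_on (\<lambda>(Z::real set) \<rho>. compact_space (Metric_space.mtopology Z \<rho>)) V"

text \<open>The true PC(V) is the supremum of these over all types 'w.\<close>
definition PC_admissible :: "'w::real_normed_vector itself \<Rightarrow> real \<Rightarrow> 'v::real_normed_vector itself \<Rightarrow> bool" where
  "PC_admissible _ c _ \<longleftrightarrow>
     (\<forall>T :: 'v \<Rightarrow> 'w. linear T \<and> (\<forall>v. norm (T v) = norm v) \<longrightarrow>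
        (\<exists>P :: 'w \<Rightarrow> 'w. linear P \<and> range P = range T \<and> (\<forall>w. P (P w) = P w) \<and>
           (\<forall>w. norm (P w) \<le> c * norm w)))"

definition PC_type :: "'w::real_normed_vector itself \<Rightarrow> 'v::real_normed_vector itself \<Rightarrow> ereal" where
  "PC_type W V = Inf (ereal ` {c. 0 \<le> c \<and> PC_admissible W c V})"

end

theory Submission
  imports Defs
begin

definition ultra :: "'a filter \<Rightarrow> bool" where
  "ultra U \<longleftrightarrow> U \<noteq> bot \<and> (\<forall>P. eventually P U \<or> eventually (\<lambda>x. \<not> P x) U)"

lemma ultra_exists:
  fixes F :: "'a filter"
  assumes "F \<noteq> bot"
  shows "\<exists>U. ultra U \<and> U \<le> F"
proof -
  define E where "E = (\<lambda>G::'a filter. {P. eventually P G})"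
  have Einj: "E G1 = E G2 \<Longrightarrow> G1 = G2" for G1 G2
    unfolding E_def by (auto simp: filter_eq_iff)
  have Ele: "G1 \<le> G2 \<longleftrightarrow> E G2 \<subseteq> E G1" for G1 G2
    unfolding E_def le_filter_def by auto
  define A where "A = {E G | G. G \<noteq> bot \<and> G \<le> F}"
  have "\<exists>M\<in>A. \<forall>X\<in>A. M \<subseteq> X \<longrightarrow> X = M"
  proof (rule subset_Zorn)
    fix C assume ch: "subset.chain A C"
    show "\<exists>U\<in>A. \<forall>X\<in>C. X \<subseteq> U"
    proof (cases "C = {}")
      case True
      then show ?thesis using assms unfolding A_def by auto
    next
      case False
      define B where "B = {G. G \<noteq> bot \<and> G \<le> F \<and> E G \<in> C}"
      have CA: "C \<subseteq> A" using ch by (simp add: subset_chain_def)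
      have Bne: "B \<noteq> {}" using False CA unfolding A_def B_def by blast
      have base: "\<exists>x\<in>B. x \<le> inf G1 G2" if "G1 \<in> B" "G2 \<in> B" for G1 G2
      proof -
        have "E G1 \<subseteq> E G2 \<or> E G2 \<subseteq> E G1"
          using ch that unfolding subset_chain_def B_def by blast
        then show ?thesis
        proof
          assume "E G1 \<subseteq> E G2"
          then have "G2 \<le> G1" using Ele by blast
          then have "G2 \<le> inf G1 G2" by simp
          then show ?thesis using that(2) by blast
        next
          assume "E G2 \<subseteq> E G1"
          then have "G1 \<le> G2" using Ele by blast
          then have "G1 \<le> inf G1 G2" by simp
          then show ?thesis using that(1) by blast
        qed
      qed
      have ev: "eventually P (Inf B) \<longleftrightarrow> (\<exists>b\<in>B. eventually P b)" for P
        by (rule eventually_Inf_base[OF Bne base])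
      have "Inf B \<noteq> bot"
      proof
        assume "Inf B = bot"
        then have "eventually (\<lambda>x. False) (Inf B)" by simp
        then obtain b where "b \<in> B" "eventually (\<lambda>x. False) b" using ev by blast
        then show False unfolding B_def by (simp add: eventually_False)
      qed
      moreover have "Inf B \<le> F"
      proof -
        obtain G where "G \<in> B" using Bne by blast
        then have "Inf B \<le> G" "G \<le> F" unfolding B_def by (auto intro: Inf_lower)
        then show ?thesis by (rule order_trans)
      qed
      moreover have "\<forall>X\<in>C. X \<subseteq> E (Inf B)"
      proof
        fix X assume "X \<in> C"
        then obtain G where "X = E G" "G \<noteq> bot" "G \<le> F" using CA unfolding A_def by blast
        then have "G \<in> B" using \<open>X \<in> C\<close> B_def by auto
        then show "X \<subseteq> E (Inf B)" using \<open>X = E G\<close> ev unfolding E_def by auto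
      qed
      ultimately show ?thesis unfolding A_def by blast
    qed
  qed
  then obtain U where UA: "E U \<in> A" and max: "\<forall>X\<in>A. E U \<subseteq> X \<longrightarrow> X = E U"
    unfolding A_def by auto
  obtain U' where "E U = E U'" "U' \<noteq> bot" "U' \<le> F" using UA unfolding A_def by auto
  then have U: "U \<noteq> bot" "U \<le> F" using Einj by auto
  have "eventually P U \<or> eventually (\<lambda>x. \<not> P x) U" for P
  proof (rule ccontr)
    assume nn: "\<not> (eventually P U \<or> eventually (\<lambda>x. \<not> P x) U)"
    define U2 where "U2 = inf U (principal {x. P x})"
    have "U2 \<noteq> bot"
    proof
      assume "U2 = bot"
      then have "eventually (\<lambda>x. False) U2" by simp
      then have "eventually (\<lambda>x. \<not> P x) U"
        unfolding U2_def eventually_inf_principal by simp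
      then show False using nn by simp
    qed
    moreover have "U2 \<le> F" using U unfolding U2_def by (meson inf.coboundedI1)
    ultimately have "E U2 \<in> A" unfolding A_def by blast
    moreover have "E U \<subseteq> E U2"
    proof -
      have "U2 \<le> U" unfolding U2_def by simp
      then show ?thesis using Ele by blast
    qed
    ultimately have "E U2 = E U" using max by blast
    moreover have "P \<in> E U2" unfolding E_def U2_def eventually_inf_principal by simp
    ultimately show False using nn unfolding E_def by auto
  qed
  then show ?thesis using U unfolding ultra_def by blast
qed

lemma ultra_compact_lim:
  fixes f :: "'a \<Rightarrow> 'b::t2_space"
  assumes "ultra U" "compact K" "eventually (\<lambda>x. f x \<in> K) U"
  shows "\<exists>l\<in>K. (f \<longlongrightarrow> l) U"
proof -
  have nb: "filtermap f U \<noteq> bot" using assms(1) unfolding ultra_def by (simp add: filtermap_bot_iff)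
  have "eventually (\<lambda>x. x \<in> K) (filtermap f U)" using assms(3) by (simp add: eventually_filtermap)
  then obtain l where l: "l \<in> K" "inf (nhds l) (filtermap f U) \<noteq> bot"
    using assms(2) nb unfolding compact_filter by blast
  have "(f \<longlongrightarrow> l) U"
  proof (rule topological_tendstoI)
    fix S assume S: "open S" "l \<in> S"
    show "eventually (\<lambda>x. f x \<in> S) U"
    proof (rule ccontr)
      assume "\<not> eventually (\<lambda>x. f x \<in> S) U"
      then have "eventually (\<lambda>x. f x \<notin> S) U" using assms(1) unfolding ultra_def by blast
      moreover have "eventually (\<lambda>x. x \<in> S) (nhds l)" using S eventually_nhds by blast
      ultimately have "eventually (\<lambda>x. False) (inf (nhds l) (filtermap f U))"
        unfolding eventually_inf by (force simp: eventually_filtermap)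
      then show False using l(2) by (simp add: eventually_False)
    qed
  qed
  then show ?thesis using l by blast
qed

lemma compact_span_cball:
  fixes B :: "'v::real_normed_vector set"
  assumes "finite B"
  shows "compact (span B \<inter> cball 0 r)"
  using assms
proof (induction B arbitrary: r rule: finite_induct)
  case empty
  have "span {} \<inter> cball (0::'v) r \<subseteq> {0}" by auto
  then have "finite (span {} \<inter> cball (0::'v) r)" using finite_subset by blast
  then show ?case by (rule finite_imp_compact)
next
  case (insert b B)
  show ?case
  proof (cases "b \<in> span B")
    case True
    then show ?thesis using insert.IH by (simp add: span_redundant)
  next
    case False
    have clo: "closed (span B)"
      unfolding closed_sequential_limits
    proof (intro allI impI, elim conjE)
      fix x l assume xs: "\<forall>n. x n \<in> span B" and lim: "x \<longlonglongrightarrow> l"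
      obtain R where R: "\<forall>n. norm (x n) \<le> R"
        using convergent_imp_bounded[OF lim] by (meson bounded_iff rangeI)
      have "\<forall>n. x n \<in> span B \<inter> cball 0 R" using xs R by auto
      moreover have "closed (span B \<inter> cball 0 R)" using insert.IH compact_imp_closed by blast
      ultimately have "l \<in> span B \<inter> cball 0 R" using lim closed_sequentially by blast
      then show "l \<in> span B" by simp
    qed
    define d where "d = infdist b (span B)"
    have "span B \<noteq> {}" using span_zero by blast
    then have "d \<noteq> 0" using False clo in_closure_iff_infdist_zero[of "span B" b]
      by (simp add: d_def closure_closed)
    then have dpos: "d > 0" using infdist_nonneg[of b "span B"] d_def by simp
    define r' where "r' = r + r / d * norm b"
    define K where "K = (\<lambda>p. fst p *\<^sub>R b + snd p) ` ({-r/d..r/d} \<times> (span B \<inter> cball 0 r'))"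
    have Kc: "compact K"
      unfolding K_def
      by (intro compact_continuous_image compact_Times insert.IH compact_Icc continuous_intros)
    have eq: "span (insert b B) \<inter> cball 0 r = K \<inter> cball 0 r"
    proof
      show "span (insert b B) \<inter> cball 0 r \<subseteq> K \<inter> cball 0 r"
      proof
        fix x assume x: "x \<in> span (insert b B) \<inter> cball 0 r"
        then obtain k where k: "x - k *\<^sub>R b \<in> span B" using span_breakdown_eq by blast
        have nx: "norm x \<le> r" using x by simp
        have kb: "\<bar>k\<bar> \<le> r / d"
        proof (cases "k = 0")
          case True
          then show ?thesis using nx dpos by (simp add: order_trans[OF norm_ge_zero])
        next
          case False
          have "(- inverse k) *\<^sub>R (x - k *\<^sub>R b) \<in> span B" using k span_mul by blast
          moreover have "(- inverse k) *\<^sub>R (x - k *\<^sub>R b) = b - inverse k *\<^sub>R x"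
            using False by (simp add: algebra_simps)
          ultimately have "d \<le> dist b (b - inverse k *\<^sub>R x)" unfolding d_def
            by (metis infdist_le)
          also have "\<dots> = norm x / \<bar>k\<bar>" by (simp add: dist_norm divide_inverse_commute)
          finally have "d * \<bar>k\<bar> \<le> norm x" using False by (simp add: field_simps)
          then have "d * \<bar>k\<bar> \<le> r" using nx by simp
          then show ?thesis using dpos by (simp add: field_simps)
        qed
        have "norm (x - k *\<^sub>R b) \<le> norm x + \<bar>k\<bar> * norm b"
          by (metis norm_scaleR norm_triangle_ineq4)
        also have "\<dots> \<le> r'"
        proof -
          have "\<bar>k\<bar> * norm b \<le> r / d * norm b" using kb by (rule mult_right_mono) simp
          then show ?thesis unfolding r'_def using nx by linarith
        qed
        finally have "x - k *\<^sub>R b \<in> span B \<inter> cball 0 r'" using k by simp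
        moreover have "k \<in> {-r/d..r/d}" using kb by auto
        ultimately have "(k, x - k *\<^sub>R b) \<in> {-r/d..r/d} \<times> (span B \<inter> cball 0 r')" by simp
        moreover have "x = fst (k, x - k *\<^sub>R b) *\<^sub>R b + snd (k, x - k *\<^sub>R b)" by simp
        ultimately have "x \<in> K" unfolding K_def by blast
        then show "x \<in> K \<inter> cball 0 r" using x by simp
      qed
    next
      show "K \<inter> cball 0 r \<subseteq> span (insert b B) \<inter> cball 0 r"
      proof
        fix x assume x: "x \<in> K \<inter> cball 0 r"
        then obtain k s where "x = k *\<^sub>R b + s" "s \<in> span B" unfolding K_def by auto
        then have "x - k *\<^sub>R b \<in> span B" by simp
        then show "x \<in> span (insert b B) \<inter> cball 0 r" using x span_breakdown_eq by blast
      qed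
    qed
    show ?thesis unfolding eq by (rule compact_Int_closed[OF Kc closed_cball])
  qed
qed

lemma compact_cball_fd:
  fixes a :: "'v::real_normed_vector"
  assumes "\<exists>B :: 'v set. finite B \<and> span B = UNIV"
  shows "compact (cball a r)"
proof -
  obtain B :: "'v set" where B: "finite B" "span B = UNIV" using assms by blast
  have "compact (span B \<inter> cball 0 (norm a + r))" by (rule compact_span_cball[OF B(1)])
  then have "compact (cball (0::'v) (norm a + r))" using B(2) by simp
  moreover have "cball a r \<subseteq> cball (0::'v) (norm a + r)"
    by (auto simp: dist_norm) (metis add.commute norm_minus_commute norm_triangle_sub order_trans add_left_mono)
  ultimately show ?thesis using compact_Int_closed[of "cball 0 (norm a + r)" "cball a r"]
    by (simp add: Int_absorb1)
qed

lemma lip_const_nonneg: "0 \<le> lip_const X \<rho> f"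
  unfolding lip_const_def by (rule Sup_upper) simp

lemma lip_const_le_iff:
  assumes "0 \<le> L"
  shows "lip_const X \<rho> f \<le> ereal L \<longleftrightarrow> (\<forall>x\<in>X. \<forall>y\<in>X. x \<noteq> y \<longrightarrow> norm (f x - f y) / \<rho> x y \<le> L)"
proof
  assume H: "lip_const X \<rho> f \<le> ereal L"
  show "\<forall>x\<in>X. \<forall>y\<in>X. x \<noteq> y \<longrightarrow> norm (f x - f y) / \<rho> x y \<le> L"
  proof (intro ballI impI)
    fix x y assume xy: "x \<in> X" "y \<in> X" "x \<noteq> y"
    have "ereal (norm (f x - f y) / \<rho> x y) \<le> lip_const X \<rho> f"
      unfolding lip_const_def by (rule Sup_upper) (use xy in blast)
    from order_trans[OF this H] show "norm (f x - f y) / \<rho> x y \<le> L" by simp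
  qed
next
  assume H: "\<forall>x\<in>X. \<forall>y\<in>X. x \<noteq> y \<longrightarrow> norm (f x - f y) / \<rho> x y \<le> L"
  show "lip_const X \<rho> f \<le> ereal L"
    unfolding lip_const_def by (rule Sup_least) (use H assms in auto)
qed

lemma lip_const_le_metric:
  assumes "Metric_space Z \<rho>" "X \<subseteq> Z" "0 \<le> L"
  shows "lip_const X \<rho> f \<le> ereal L \<longleftrightarrow> (\<forall>x\<in>X. \<forall>y\<in>X. norm (f x - f y) \<le> L * \<rho> x y)"
proof -
  have pos: "\<rho> x y > 0" if "x \<in> X" "y \<in> X" "x \<noteq> y" for x y
    using Metric_space.nonneg[OF assms(1), of x y] Metric_space.zero[OF assms(1), of x y] that assms(2)
    by force
  show ?thesis unfolding lip_const_le_iff[OF assms(3)]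
  proof (rule iffI)
    assume H: "\<forall>x\<in>X. \<forall>y\<in>X. x \<noteq> y \<longrightarrow> norm (f x - f y) / \<rho> x y \<le> L"
    show "\<forall>x\<in>X. \<forall>y\<in>X. norm (f x - f y) \<le> L * \<rho> x y"
    proof (intro ballI)
    fix x y assume xy: "x \<in> X" "y \<in> X"
    show "norm (f x - f y) \<le> L * \<rho> x y"
    proof (cases "x = y")
      case True then show ?thesis using assms Metric_space.nonneg[OF assms(1)] by simp
    next
      case False
      then have "norm (f x - f y) / \<rho> x y \<le> L" using H xy by blast
      then show ?thesis using pos[OF xy False] by (simp add: divide_le_eq)
    qed
    qed
  next
    assume H: "\<forall>x\<in>X. \<forall>y\<in>X. norm (f x - f y) \<le> L * \<rho> x y"
    show "\<forall>x\<in>X. \<forall>y\<in>X. x \<noteq> y \<longrightarrow> norm (f x - f y) / \<rho> x y \<le> L"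
    proof (intro ballI impI)
      fix x y assume xy: "x \<in> X" "y \<in> X" "x \<noteq> y"
      then show "norm (f x - f y) / \<rho> x y \<le> L" using H pos[OF xy] by (simp add: divide_le_eq)
    qed
  qed
qed

lemma lip_const_mono_set: "X \<subseteq> Y \<Longrightarrow> lip_const X \<rho> f \<le> lip_const Y \<rho> f"
  unfolding lip_const_def by (rule Sup_subset_mono) auto

lemma lip_const_cong:
  assumes "\<And>x. x \<in> X \<Longrightarrow> f x = g x" shows "lip_const X \<rho> f = lip_const X \<rho> g"
proof -
  have "{ereal (norm (f x - f y) / \<rho> x y) |x y. x \<in> X \<and> y \<in> X \<and> x \<noteq> y} =
     {ereal (norm (g x - g y) / \<rho> x y) |x y. x \<in> X \<and> y \<in> X \<and> x \<noteq> y}" (is "?A = ?B")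
  proof (intro set_eqI iffI)
    fix z assume "z \<in> ?A"
    then obtain x y where "x \<in> X" "y \<in> X" "x \<noteq> y" "z = ereal (norm (f x - f y) / \<rho> x y)" by blast
    then show "z \<in> ?B" using assms by auto
  next
    fix z assume "z \<in> ?B"
    then obtain x y where xy: "x \<in> X" "y \<in> X" "x \<noteq> y" "z = ereal (norm (g x - g y) / \<rho> x y)" by blast
    then have "z = ereal (norm (f x - f y) / \<rho> x y)" using assms by simp
    then show "z \<in> ?A" using xy by blast
  qed
  then show ?thesis unfolding lip_const_def by simp
qed

lemma lip_const_reindex:
  assumes "inj_on h A" "\<And>x y. x \<in> A \<Longrightarrow> y \<in> A \<Longrightarrow> \<rho>' (h x) (h y) = \<rho> x y"
    "\<And>x. x \<in> A \<Longrightarrow> f' (h x) = f x"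
  shows "lip_const (h ` A) \<rho>' f' = lip_const A \<rho> f"
proof -
  have "{ereal (norm (f' x - f' y) / \<rho>' x y) | x y. x \<in> h ` A \<and> y \<in> h ` A \<and> x \<noteq> y}
      = {ereal (norm (f x - f y) / \<rho> x y) | x y. x \<in> A \<and> y \<in> A \<and> x \<noteq> y}"
  proof (intro set_eqI iffI)
    fix z assume "z \<in> {ereal (norm (f' x - f' y) / \<rho>' x y) | x y. x \<in> h ` A \<and> y \<in> h ` A \<and> x \<noteq> y}"
    then obtain a b where "a \<in> A" "b \<in> A" "h a \<noteq> h b" "z = ereal (norm (f' (h a) - f' (h b)) / \<rho>' (h a) (h b))"
      by blast
    then show "z \<in> {ereal (norm (f x - f y) / \<rho> x y) | x y. x \<in> A \<and> y \<in> A \<and> x \<noteq> y}"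
      using assms by auto
  next
    fix z assume "z \<in> {ereal (norm (f x - f y) / \<rho> x y) | x y. x \<in> A \<and> y \<in> A \<and> x \<noteq> y}"
    then obtain a b where ab: "a \<in> A" "b \<in> A" "a \<noteq> b" "z = ereal (norm (f a - f b) / \<rho> a b)"
      by blast
    then have "h a \<noteq> h b" using assms(1) by (meson inj_onD)
    then show "z \<in> {ereal (norm (f' x - f' y) / \<rho>' x y) | x y. x \<in> h ` A \<and> y \<in> h ` A \<and> x \<noteq> y}"
      using ab assms by (smt (verit) image_eqI mem_Collect_eq)
  qed
  then show ?thesis unfolding lip_const_def by simp
qed

lemma lip_const_finite_cases:
  obtains "lip_const X \<rho> f = \<infinity>" | L where "0 \<le> L" "lip_const X \<rho> f = ereal L"
proof -
  have "0 \<le> lip_const X \<rho> f" by (rule lip_const_nonneg)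
  then show ?thesis using that by (cases "lip_const X \<rho> f") auto
qed

lemma metric_transfer:
  assumes "Metric_space Z \<rho>" "\<And>x. x \<in> Z \<Longrightarrow> k (h x) = x"
  shows "Metric_space (h ` Z) (\<lambda>a b. \<rho> (k a) (k b))"
proof -
  interpret M: Metric_space Z \<rho> by fact
  show ?thesis
  proof
    fix x y show "0 \<le> \<rho> (k x) (k y)" by simp
    show "\<rho> (k x) (k y) = \<rho> (k y) (k x)" by (rule M.commute)
  next
    fix x y assume "x \<in> h ` Z" "y \<in> h ` Z"
    then show "(\<rho> (k x) (k y) = 0) = (x = y)" using assms(2) by auto
  next
    fix x y z assume "x \<in> h ` Z" "y \<in> h ` Z" "z \<in> h ` Z"
    then show "\<rho> (k x) (k z) \<le> \<rho> (k x) (k y) + \<rho> (k y) (k z)" using assms(2) M.triangle by auto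
  qed
qed

lemma Inf_admissible_mono:
  assumes "\<And>c. 0 \<le> c \<Longrightarrow> A c \<Longrightarrow> B c"
  shows "Inf (ereal ` {c. 0 \<le> c \<and> B c}) \<le> Inf (ereal ` {c. 0 \<le> c \<and> A c})"
  by (rule Inf_superset_mono) (use assms in auto)

lemma fin_ext:
  fixes f :: "'z \<Rightarrow> 'v::real_normed_vector"
  assumes adm: "LE_admissible (\<lambda>(Z::nat set) \<rho>. finite Z) c TYPE('v)"
    and c: "0 \<le> c" and M: "Metric_space Z \<rho>" and fin: "finite Z" and XZ: "X \<subseteq> Z" and L: "0 \<le> L"
    and lipf: "\<forall>x\<in>X. \<forall>y\<in>X. norm (f x - f y) \<le> L * \<rho> x y"
  shows "\<exists>g. (\<forall>x\<in>X. g x = f x) \<and> (\<forall>x\<in>Z. \<forall>y\<in>Z. norm (g x - g y) \<le> c * L * \<rho> x y)"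
proof -
  obtain h :: "'z \<Rightarrow> nat" and n where hZ: "h ` Z = {i. i < n}" and inj: "inj_on h Z"
    using finite_imp_inj_to_nat_seg[OF fin] by blast
  define k where "k = inv_into Z h"
  have kh: "k (h x) = x" if "x \<in> Z" for x using inj that unfolding k_def by simp
  define \<rho>' where "\<rho>' = (\<lambda>a b. \<rho> (k a) (k b))"
  have M': "Metric_space (h ` Z) \<rho>'" unfolding \<rho>'_def by (rule metric_transfer[OF M]) (rule kh)
  have fin': "finite (h ` Z)" using fin by simp
  obtain g' where g'X: "\<forall>x\<in>h ` X. g' x = (f \<circ> k) x"
    and g'L: "lip_const (h ` Z) \<rho>' g' \<le> ereal c * lip_const (h ` X) \<rho>' (f \<circ> k)"
    using adm M' fin' XZ unfolding LE_admissible_def by (metis (no_types, lifting) case_prod_conv image_mono)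
  have "lip_const (h ` X) \<rho>' (f \<circ> k) = lip_const X \<rho> f"
    by (rule lip_const_reindex) (use inj XZ kh in \<open>auto simp: \<rho>'_def subset_iff intro: inj_on_subset\<close>)
  also have "\<dots> \<le> ereal L" using lip_const_le_metric[OF M XZ L] lipf by blast
  finally have e1: "lip_const (h ` X) \<rho>' (f \<circ> k) \<le> ereal L" .
  have e2: "ereal c * lip_const (h ` X) \<rho>' (f \<circ> k) \<le> ereal c * ereal L"
    by (rule ereal_mult_left_mono[OF e1]) (simp add: c)
  have "lip_const (h ` Z) \<rho>' g' \<le> ereal (c * L)" using order_trans[OF g'L e2] by simp
  moreover have "lip_const (h ` Z) \<rho>' g' = lip_const Z \<rho> (g' \<circ> h)"
    by (rule lip_const_reindex) (use inj kh in \<open>auto simp: \<rho>'_def\<close>)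
  ultimately have "\<forall>x\<in>Z. \<forall>y\<in>Z. norm ((g' \<circ> h) x - (g' \<circ> h) y) \<le> c * L * \<rho> x y"
    using lip_const_le_metric[OF M order_refl, of "c * L" "g' \<circ> h"] c L by simp
  moreover have "\<forall>x\<in>X. (g' \<circ> h) x = f x" using g'X kh XZ by auto
  ultimately show ?thesis by blast
qed

lemma adm_zero_trivial:
  assumes adm: "LE_admissible (\<lambda>(Z::nat set) \<rho>. finite Z) 0 TYPE('v::real_normed_vector)"
  shows "(v::'v) = 0"
proof -
  define \<rho> where "\<rho> = (\<lambda>i j::nat. dist (real i) (real j))"
  have M: "Metric_space {0,1::nat} \<rho>"
    by unfold_locales (auto simp: \<rho>_def dist_commute intro: dist_triangle)
  define f where "f = (\<lambda>i::nat. if i = 1 then v else 0)"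
  obtain g where gX: "\<forall>x\<in>{0,1}. g x = f x" and gL: "lip_const {0,1} \<rho> g \<le> ereal 0 * lip_const {0,1} \<rho> f"
    using adm M unfolding LE_admissible_def by (metis (no_types, lifting) case_prod_conv finite.emptyI finite.insertI order_refl)
  have "lip_const {0,1} \<rho> g \<le> ereal 0" using gL by (simp add: zero_ereal_def[symmetric])
  then have "norm (g 1 - g 0) \<le> 0 * \<rho> 1 0" using lip_const_le_metric[OF M order_refl order_refl] by blast
  then show ?thesis using gX by (simp add: f_def)
qed

lemma arb_ext:
  fixes f :: "'z \<Rightarrow> 'v::real_normed_vector"
  assumes fd: "\<exists>B :: 'v set. finite B \<and> span B = UNIV"
    and adm: "LE_admissible (\<lambda>(Z::nat set) \<rho>. finite Z) c TYPE('v)"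
    and c: "0 \<le> c" and M: "Metric_space Z \<rho>" and XZ: "X \<subseteq> Z" and L: "0 \<le> L"
    and lipf: "\<forall>x\<in>X. \<forall>y\<in>X. norm (f x - f y) \<le> L * \<rho> x y"
  shows "\<exists>g. (\<forall>x\<in>X. g x = f x) \<and> (\<forall>x\<in>Z. \<forall>y\<in>Z. norm (g x - g y) \<le> c * L * \<rho> x y)"
proof (cases "X = {}")
  case True
  have "\<forall>x\<in>Z. \<forall>y\<in>Z. 0 \<le> c * L * \<rho> x y"
    using Metric_space.nonneg[OF M] c L by (metis mult_nonneg_nonneg)
  then show ?thesis using True by (intro exI[of _ "\<lambda>_. 0"]) simp
next
  case False
  then obtain x0 where x0: "x0 \<in> X" by blast
  define Q where "Q = (\<lambda>S g. (\<forall>x\<in>X \<inter> insert x0 S. g x = f x) \<and>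
      (\<forall>x\<in>insert x0 S. \<forall>y\<in>insert x0 S. norm (g x - g y) \<le> c * L * \<rho> x y))"
  define G where "G = (\<lambda>S. SOME g. Q S g)"
  have GS: "Q S (G S)" if "finite S" "S \<subseteq> Z" for S
  proof -
    have sub: "insert x0 S \<subseteq> Z" using that x0 XZ by auto
    have M': "Metric_space (insert x0 S) \<rho>" by (rule Metric_space.subspace[OF M sub])
    have "\<exists>g. Q S g" unfolding Q_def
      by (rule fin_ext[OF adm c M']) (use that lipf L in auto)
    then show ?thesis unfolding G_def by (rule someI_ex)
  qed
  obtain U where U: "ultra U" "U \<le> finite_subsets_at_top Z"
    using ultra_exists[OF finite_subsets_at_top_neq_bot] by blast
  have Unb: "U \<noteq> bot" using U(1) unfolding ultra_def by simp
  have evz: "eventually (\<lambda>S. finite S \<and> S \<subseteq> Z \<and> z \<in> S) U" if "z \<in> Z" for z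
  proof -
    have "eventually (\<lambda>S. finite S \<and> S \<subseteq> Z \<and> z \<in> S) (finite_subsets_at_top Z)"
      unfolding eventually_finite_subsets_at_top using that by (intro exI[of _ "{z}"]) auto
    then show ?thesis using U(2) by (simp add: le_filter_def)
  qed
  have conv: "((\<lambda>S. G S z) \<longlongrightarrow> Lim U (\<lambda>S. G S z)) U" if "z \<in> Z" for z
  proof -
    have "eventually (\<lambda>S. G S z \<in> cball (f x0) (c * L * \<rho> z x0)) U"
      using evz[OF that]
    proof eventually_elim
      case (elim S)
      then have "Q S (G S)" using GS by blast
      then have "norm (G S z - G S x0) \<le> c * L * \<rho> z x0" "G S x0 = f x0"
        unfolding Q_def using elim x0 by auto
      then show ?case by (simp add: dist_norm norm_minus_commute)
    qed
    from ultra_compact_lim[OF U(1) compact_cball_fd[OF fd] this]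
    obtain l where "((\<lambda>S. G S z) \<longlongrightarrow> l) U" by blast
    then show ?thesis using tendsto_Lim Unb by metis
  qed
  define g where "g = (\<lambda>z. Lim U (\<lambda>S. G S z))"
  have "\<forall>x\<in>X. g x = f x"
  proof
    fix x assume x: "x \<in> X"
    have "eventually (\<lambda>S. G S x = f x) U"
      using evz[of x] x XZ
    proof -
      have "eventually (\<lambda>S. finite S \<and> S \<subseteq> Z \<and> x \<in> S) U" using evz x XZ by blast
      then show ?thesis
      proof eventually_elim
        case (elim S)
        then show ?case using GS[of S] x unfolding Q_def by auto
      qed
    qed
    then have "((\<lambda>S. G S x) \<longlongrightarrow> f x) U" by (rule tendsto_eventually)
    then show "g x = f x" unfolding g_def using tendsto_Lim Unb by metis
  qed
  moreover have "\<forall>x\<in>Z. \<forall>y\<in>Z. norm (g x - g y) \<le> c * L * \<rho> x y"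
  proof (intro ballI)
    fix x y assume xy: "x \<in> Z" "y \<in> Z"
    have "((\<lambda>S. norm (G S x - G S y)) \<longlongrightarrow> norm (g x - g y)) U"
      unfolding g_def by (intro tendsto_intros conv xy)
    moreover have "eventually (\<lambda>S. norm (G S x - G S y) \<le> c * L * \<rho> x y) U"
      using eventually_conj[OF evz[OF xy(1)] evz[OF xy(2)]]
    proof eventually_elim
      case (elim S)
      then show ?case using GS[of S] unfolding Q_def by auto
    qed
    ultimately show "norm (g x - g y) \<le> c * L * \<rho> x y"
      using tendsto_upperbound Unb by blast
  qed
  ultimately show ?thesis by blast
qed

lemma adm_fin_to_any:
  fixes P :: "'z set \<Rightarrow> ('z \<Rightarrow> 'z \<Rightarrow> real) \<Rightarrow> bool"
  assumes fd: "\<exists>B :: 'v::real_normed_vector set. finite B \<and> span B = UNIV"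
    and adm: "LE_admissible (\<lambda>(Z::nat set) \<rho>. finite Z) c TYPE('v)"
    and c: "0 \<le> c"
  shows "LE_admissible P c TYPE('v)"
  unfolding LE_admissible_def
proof (intro allI impI, elim conjE)
  fix Z :: "'z set" and \<rho> X and f :: "'z \<Rightarrow> 'v"
  assume M: "Metric_space Z \<rho>" and XZ: "X \<subseteq> Z"
  show "\<exists>g. (\<forall>x\<in>X. g x = f x) \<and> lip_const Z \<rho> g \<le> ereal c * lip_const X \<rho> f"
  proof (cases "c = 0")
    case True
    have triv: "\<And>v::'v. v = 0" using adm True adm_zero_trivial by blast
    have "lip_const Z \<rho> f \<le> ereal 0"
      using lip_const_le_metric[OF M order_refl order_refl, of f] triv[of "f _ - f _"] by simp
    then show ?thesis using True by (intro exI[of _ f]) (simp add: zero_ereal_def[symmetric])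
  next
    case False
    then have cpos: "c > 0" using c by simp
    show ?thesis
    proof (cases rule: lip_const_finite_cases[of X \<rho> f])
      case 1
      then show ?thesis using cpos by (intro exI[of _ f]) simp
    next
      case (2 L)
      then have "\<forall>x\<in>X. \<forall>y\<in>X. norm (f x - f y) \<le> L * \<rho> x y"
        using lip_const_le_metric[OF M XZ \<open>0 \<le> L\<close>, of f] 2 by simp
      then obtain g where g: "\<forall>x\<in>X. g x = f x" "\<forall>x\<in>Z. \<forall>y\<in>Z. norm (g x - g y) \<le> c * L * \<rho> x y"
        using arb_ext[OF fd adm c M XZ \<open>0 \<le> L\<close>] by blast
      have "lip_const Z \<rho> g \<le> ereal (c * L)"
        using lip_const_le_metric[OF M order_refl, of "c * L" g] g(2) c \<open>0 \<le> L\<close> by simp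
      then show ?thesis using g(1) 2 by (intro exI[of _ g]) simp
    qed
  qed
qed

lemma LE_adm_V:
  fixes V :: "'v::real_normed_vector itself"
  shows "LE_admissible P c V = LE_admissible P c TYPE('v)"
  by (simp add: LE_admissible_def)

lemma LE_f_le_LE_type_nat: "LE_f V \<le> LE_type TYPE(nat) V"
  unfolding LE_f_def LE_type_def LE_const_on_def
  by (rule Inf_admissible_mono) (auto simp: LE_admissible_def)

lemma LE_type_le_LE_f:
  fixes V :: "'v::real_normed_vector itself"
  assumes fd: "\<exists>B :: 'v set. finite B \<and> span B = UNIV"
  shows "LE_type TYPE('z) V \<le> LE_f V"
  unfolding LE_f_def LE_type_def LE_const_on_def
  by (rule Inf_admissible_mono) (use adm_fin_to_any[OF fd] LE_adm_V in metis)

lemma LE_c_le_LE_f: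
  fixes V :: "'v::real_normed_vector itself"
  assumes fd: "\<exists>B :: 'v set. finite B \<and> span B = UNIV"
  shows "LE_c V \<le> LE_f V"
  unfolding LE_f_def LE_c_def LE_const_on_def
  by (rule Inf_admissible_mono) (use adm_fin_to_any[OF fd] LE_adm_V in metis)

lemma LE_f_le_LE_c:
  fixes V :: "'v::real_normed_vector itself"
  shows "LE_f V \<le> LE_c V"
  unfolding LE_f_def LE_c_def LE_const_on_def
proof (rule Inf_admissible_mono)
  fix c assume c: "0 \<le> c"
    and adm: "LE_admissible (\<lambda>(Z::real set) \<rho>. compact_space (Metric_space.mtopology Z \<rho>)) c V"
  show "LE_admissible (\<lambda>(Z::nat set) \<rho>. finite Z) c V"
    unfolding LE_admissible_def
  proof (intro allI impI, elim conjE)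
    fix Z :: "nat set" and \<rho> X and f :: "nat \<Rightarrow> 'v"
    assume M: "Metric_space Z \<rho>" and fin: "(\<lambda>(Z::nat set) \<rho>. finite Z) Z \<rho>" and XZ: "X \<subseteq> Z"
    define k where "k = (\<lambda>a::real. nat \<lfloor>a\<rfloor>)"
    have kh: "k (real n) = n" for n unfolding k_def by simp
    define \<rho>' where "\<rho>' = (\<lambda>a b. \<rho> (k a) (k b))"
    have M': "Metric_space (real ` Z) \<rho>'" unfolding \<rho>'_def by (rule metric_transfer[OF M]) (rule kh)
    have "compact_space (Metric_space.mtopology (real ` Z) \<rho>')"
      unfolding compact_space_def Metric_space.topspace_mtopology[OF M']
      by (rule finite_imp_compactin) (use fin in \<open>auto simp: Metric_space.topspace_mtopology[OF M']\<close>)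
    then obtain g' where g'X: "\<forall>x\<in>real ` X. g' x = (f \<circ> k) x"
      and g'L: "lip_const (real ` Z) \<rho>' g' \<le> ereal c * lip_const (real ` X) \<rho>' (f \<circ> k)"
      using adm M' XZ unfolding LE_admissible_def by (metis (no_types, lifting) case_prod_conv image_mono)
    have e1: "lip_const (real ` X) \<rho>' (f \<circ> k) = lip_const X \<rho> f"
      by (rule lip_const_reindex) (auto simp: \<rho>'_def kh)
    have e2: "lip_const (real ` Z) \<rho>' g' = lip_const Z \<rho> (g' \<circ> real)"
      by (rule lip_const_reindex) (auto simp: \<rho>'_def kh)
    have "\<forall>x\<in>X. (g' \<circ> real) x = f x" using g'X kh by simp
    moreover have "lip_const Z \<rho> (g' \<circ> real) \<le> ereal c * lip_const X \<rho> f" using g'L e1 e2 by simp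
    ultimately show "\<exists>g. (\<forall>x\<in>X. g x = f x) \<and> lip_const Z \<rho> g \<le> ereal c * lip_const X \<rho> f" by blast
  qed
qed

fun fol :: "'a::real_vector list \<Rightarrow> nat \<Rightarrow> ('a \<Rightarrow> 'b::real_normed_vector) \<Rightarrow> 'b" where
  "fol [] N h = h 0"
| "fol (s # ss) N h = (1 / real N) *\<^sub>R (\<Sum>j<N. fol ss N (\<lambda>x. h (x + real j *\<^sub>R s)))"

lemma fol_add: "fol ss N (\<lambda>x. h1 x + h2 x) = fol ss N h1 + fol ss N h2"
  by (induction ss arbitrary: h1 h2) (simp_all add: sum.distrib scaleR_add_right)

lemma fol_diff: "fol ss N (\<lambda>x. h1 x - h2 x) = fol ss N h1 - fol ss N h2"
  by (induction ss arbitrary: h1 h2) (simp_all add: sum_subtractf scaleR_diff_right)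

lemma fol_const: "N > 0 \<Longrightarrow> fol ss N (\<lambda>_. c) = c"
  by (induction ss) (simp_all add: sum_constant_scaleR)

lemma fol_bound:
  assumes "N > 0" "\<And>x. norm (h x) \<le> B"
  shows "norm (fol ss N h) \<le> B"
  using assms(2)
proof (induction ss arbitrary: h)
  case Nil
  then show ?case by simp
next
  case (Cons s ss)
  have "norm (\<Sum>j<N. fol ss N (\<lambda>x. h (x + real j *\<^sub>R s))) \<le> (\<Sum>j<N. norm (fol ss N (\<lambda>x. h (x + real j *\<^sub>R s))))"
    by (rule norm_sum)
  also have "\<dots> \<le> (\<Sum>j<N. B)" by (rule sum_mono) (use Cons in auto)
  also have "\<dots> = real N * B" by simp
  finally show ?case using assms(1) by (simp add: field_simps)
qed

lemma fol_shift:
  assumes N: "N > 0" and hB: "\<And>x. norm (h x) \<le> B" and y: "y \<in> set ss"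
  shows "norm (fol ss N (\<lambda>x. h (x + y)) - fol ss N h) \<le> 2 * B / real N"
  using hB y
proof (induction ss arbitrary: h)
  case Nil
  then show ?case by simp
next
  case (Cons s ss)
  have B0: "0 \<le> B" using Cons.prems(1)[of 0] norm_ge_zero order_trans by blast
  show ?case
  proof (cases "y = s")
    case True
    define F where "F = (\<lambda>j::nat. fol ss N (\<lambda>x. h (x + real j *\<^sub>R s)))"
    have e1: "fol (s # ss) N (\<lambda>x. h (x + y)) = (1 / real N) *\<^sub>R (\<Sum>j<N. F (Suc j))"
    proof -
      have "(\<lambda>x. h (x + real j *\<^sub>R s + y)) = (\<lambda>x. h (x + real (Suc j) *\<^sub>R s))" for j
        using True by (simp add: algebra_simps)
      then show ?thesis by (simp add: F_def)
    qed
    have e2: "fol (s # ss) N h = (1 / real N) *\<^sub>R (\<Sum>j<N. F j)" by (simp add: F_def)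
    have "fol (s # ss) N (\<lambda>x. h (x + y)) - fol (s # ss) N h = (1 / real N) *\<^sub>R (F N - F 0)"
    proof -
      have "(\<Sum>j<N. F (Suc j) - F j) = F N - F 0" by (rule sum_lessThan_telescope)
      then have "(\<Sum>j<N. F (Suc j)) - (\<Sum>j<N. F j) = F N - F 0" by (simp only: sum_subtractf)
      from arg_cong[of _ _ "\<lambda>v. (1 / real N) *\<^sub>R v", OF this]
      show ?thesis unfolding e1 e2 by (simp only: scaleR_diff_right)
    qed
    moreover have "norm (F N - F 0) \<le> 2 * B"
    proof -
      have "norm (F N) \<le> B" "norm (F 0) \<le> B" unfolding F_def using Cons.prems(1) by (simp_all add: fol_bound[OF N])
      then show ?thesis using norm_triangle_ineq4[of "F N" "F 0"] by simp
    qed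
    ultimately have "norm (fol (s # ss) N (\<lambda>x. h (x + y)) - fol (s # ss) N h) \<le> (1 / real N) * (2 * B)"
      using N by (simp del: fol.simps add: divide_right_mono)
    then show ?thesis by simp
  next
    case False
    then have y': "y \<in> set ss" using Cons.prems(2) by simp
    define a where "a = (\<lambda>j::nat. fol ss N (\<lambda>x. h (x + real j *\<^sub>R s + y)))"
    define b where "b = (\<lambda>j::nat. fol ss N (\<lambda>x. h (x + real j *\<^sub>R s)))"
    have ab: "norm (a j - b j) \<le> 2 * B / real N" for j
    proof -
      have "(\<lambda>x. h (x + real j *\<^sub>R s + y)) = (\<lambda>x. (\<lambda>z. h (z + real j *\<^sub>R s)) (x + y))"
        by (rule ext) (simp add: add_ac)
      then have "a j = fol ss N (\<lambda>x. (\<lambda>z. h (z + real j *\<^sub>R s)) (x + y))" unfolding a_def by simp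
      then show ?thesis unfolding b_def using Cons.IH[of "\<lambda>z. h (z + real j *\<^sub>R s)"] Cons.prems(1) y' by simp
    qed
    have "fol (s # ss) N (\<lambda>x. h (x + y)) - fol (s # ss) N h = (1 / real N) *\<^sub>R (\<Sum>j<N. a j - b j)"
    proof -
      have "(\<Sum>j<N. a j - b j) = (\<Sum>j<N. a j) - (\<Sum>j<N. b j)" by (rule sum_subtractf)
      then show ?thesis by (simp add: a_def b_def scaleR_diff_right)
    qed
    moreover have "norm (\<Sum>j<N. a j - b j) \<le> real N * (2 * B / real N)"
    proof -
      have "norm (\<Sum>j<N. a j - b j) \<le> (\<Sum>j<N. norm (a j - b j))" by (rule norm_sum)
      also have "\<dots> \<le> (\<Sum>j<N. 2 * B / real N)" by (rule sum_mono) (rule ab)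
      finally show ?thesis by simp
    qed
    ultimately show ?thesis using N by (simp add: field_simps)
  qed
qed

definition idxF :: "('a set \<times> nat) filter" where
  "idxF = finite_subsets_at_top UNIV \<times>\<^sub>F sequentially"

definition UF :: "('a set \<times> nat) filter" where
  "UF = (SOME U. ultra U \<and> U \<le> idxF)"

lemma UF: "ultra (UF :: ('a set \<times> nat) filter)" "(UF :: ('a set \<times> nat) filter) \<le> idxF" "(UF :: ('a set \<times> nat) filter) \<noteq> bot"
proof -
  have "(idxF :: ('a set \<times> nat) filter) \<noteq> bot" unfolding idxF_def prod_filter_eq_bot by simp
  then have "\<exists>U. ultra U \<and> U \<le> (idxF :: ('a set \<times> nat) filter)" by (rule ultra_exists)
  from someI_ex[OF this] have "ultra (UF :: ('a set \<times> nat) filter) \<and> (UF :: ('a set \<times> nat) filter) \<le> idxF" unfolding UF_def .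
  then show "ultra (UF :: ('a set \<times> nat) filter)" "(UF :: ('a set \<times> nat) filter) \<le> idxF"
     "(UF :: ('a set \<times> nat) filter) \<noteq> bot" unfolding ultra_def by auto
qed

lemma ev_UF:
  assumes "finite S0"
  shows "eventually (\<lambda>p. finite (fst p) \<and> S0 \<subseteq> fst p \<and> N0 \<le> snd p) UF"
proof -
  have "eventually (\<lambda>p. finite (fst p) \<and> S0 \<subseteq> fst p \<and> N0 \<le> snd p) idxF"
    unfolding idxF_def eventually_prod_filter
  proof (intro exI conjI)
    show "eventually (\<lambda>S. finite S \<and> S0 \<subseteq> S) (finite_subsets_at_top UNIV)"
      unfolding eventually_finite_subsets_at_top using assms by blast
    show "eventually (\<lambda>N. N0 \<le> N) sequentially" by (rule eventually_ge_at_top)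
    show "\<forall>x y. finite x \<and> S0 \<subseteq> x \<longrightarrow> N0 \<le> y \<longrightarrow> finite (fst (x, y)) \<and> S0 \<subseteq> fst (x, y) \<and> N0 \<le> snd (x, y)"
      by simp
  qed
  then show ?thesis using UF(2) le_filter_def by blast
qed

lemma ev_UF1: "eventually (\<lambda>p. finite (fst p) \<and> y \<in> fst p \<and> N0 \<le> snd p) UF"
  using ev_UF[of "{y}" N0] by simp

lemma ev_UF0: "eventually (\<lambda>p. N0 \<le> snd p) UF"
  using ev_UF[of "{}" N0] by (auto elim: eventually_mono)

definition lst :: "'a set \<Rightarrow> 'a list" where "lst S = (SOME l. set l = S)"

lemma set_lst: "finite S \<Longrightarrow> set (lst S) = S"
  unfolding lst_def by (rule someI_ex) (rule finite_list)

definition foln :: "('a::real_vector \<Rightarrow> 'b::real_normed_vector) \<Rightarrow> 'a set \<times> nat \<Rightarrow> 'b" where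
  "foln h p = fol (lst (fst p)) (snd p) h"

definition mean :: "('a::real_vector \<Rightarrow> 'b::real_normed_vector) \<Rightarrow> 'b" where
  "mean h = Lim UF (foln h)"

lemma ev_pos: "eventually (\<lambda>p. snd p > 0) UF"
  using ev_UF0[of 1] by (auto elim: eventually_mono)

lemma mean_tendsto:
  fixes h :: "'a::real_vector \<Rightarrow> 'b::real_normed_vector"
  assumes fd: "\<exists>B :: 'b set. finite B \<and> span B = UNIV" and hB: "\<And>x. norm (h x) \<le> B"
  shows "(foln h \<longlongrightarrow> mean h) UF"
proof -
  have "eventually (\<lambda>p. foln h p \<in> cball 0 B) UF"
    using ev_pos by eventually_elim (simp add: foln_def fol_bound hB)
  from ultra_compact_lim[OF UF(1) compact_cball_fd[OF fd] this]
  obtain l where "(foln h \<longlongrightarrow> l) UF" by blast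
  then show ?thesis unfolding mean_def using tendsto_Lim UF(3) by metis
qed

lemma mean_eqI:
  assumes "(foln h \<longlongrightarrow> l) UF"
  shows "mean h = l"
  unfolding mean_def using tendsto_Lim UF(3) assms by metis

lemma mean_add:
  fixes h1 h2 :: "'a::real_vector \<Rightarrow> 'b::real_normed_vector"
  assumes fd: "\<exists>B :: 'b set. finite B \<and> span B = UNIV"
    and b1: "\<And>x. norm (h1 x) \<le> B1" and b2: "\<And>x. norm (h2 x) \<le> B2"
  shows "mean (\<lambda>x. h1 x + h2 x) = mean h1 + mean h2"
proof (rule mean_eqI)
  have "((\<lambda>p. foln h1 p + foln h2 p) \<longlongrightarrow> mean h1 + mean h2) UF"
    by (rule tendsto_add[OF mean_tendsto[OF fd b1] mean_tendsto[OF fd b2]])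
  moreover have "foln h1 p + foln h2 p = foln (\<lambda>x. h1 x + h2 x) p" for p
    by (simp add: foln_def fol_add)
  ultimately show "(foln (\<lambda>x. h1 x + h2 x) \<longlongrightarrow> mean h1 + mean h2) UF" by simp
qed

lemma mean_diff:
  fixes h1 h2 :: "'a::real_vector \<Rightarrow> 'b::real_normed_vector"
  assumes fd: "\<exists>B :: 'b set. finite B \<and> span B = UNIV"
    and b1: "\<And>x. norm (h1 x) \<le> B1" and b2: "\<And>x. norm (h2 x) \<le> B2"
  shows "mean (\<lambda>x. h1 x - h2 x) = mean h1 - mean h2"
proof (rule mean_eqI)
  have "((\<lambda>p. foln h1 p - foln h2 p) \<longlongrightarrow> mean h1 - mean h2) UF"
    by (rule tendsto_diff[OF mean_tendsto[OF fd b1] mean_tendsto[OF fd b2]])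
  moreover have "foln h1 p - foln h2 p = foln (\<lambda>x. h1 x - h2 x) p" for p
    by (simp add: foln_def fol_diff)
  ultimately show "(foln (\<lambda>x. h1 x - h2 x) \<longlongrightarrow> mean h1 - mean h2) UF" by simp
qed

lemma mean_const: "mean (\<lambda>_::'a::real_vector. c) = (c::'b::real_normed_vector)"
proof (rule mean_eqI)
  have "eventually (\<lambda>p. c = foln (\<lambda>_::'a. c) p) UF"
    using ev_pos by eventually_elim (simp add: foln_def fol_const)
  then show "(foln (\<lambda>_::'a. c) \<longlongrightarrow> c) UF"
    by (rule Lim_transform_eventually[OF tendsto_const])
qed

lemma mean_norm:
  fixes h :: "'a::real_vector \<Rightarrow> 'b::real_normed_vector"
  assumes fd: "\<exists>B :: 'b set. finite B \<and> span B = UNIV" and hB: "\<And>x. norm (h x) \<le> B"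
  shows "norm (mean h) \<le> B"
proof -
  have "((\<lambda>p. norm (foln h p)) \<longlongrightarrow> norm (mean h)) UF"
    by (intro tendsto_norm mean_tendsto[OF fd hB])
  moreover have "eventually (\<lambda>p. norm (foln h p) \<le> B) UF"
    using ev_pos by eventually_elim (simp add: foln_def fol_bound hB)
  ultimately show ?thesis using tendsto_upperbound UF(3) by blast
qed

lemma mean_shift:
  fixes h :: "'a::real_vector \<Rightarrow> 'b::real_normed_vector"
  assumes fd: "\<exists>B :: 'b set. finite B \<and> span B = UNIV" and hB: "\<And>x. norm (h x) \<le> B"
  shows "mean (\<lambda>x. h (x + y)) = mean h"
proof -
  have hB': "\<And>x. norm (h (x + y)) \<le> B" using hB by blast
  have t1: "((\<lambda>p. foln (\<lambda>x. h (x + y)) p - foln h p) \<longlongrightarrow> mean (\<lambda>x. h (x + y)) - mean h) UF"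
    by (rule tendsto_diff[OF mean_tendsto[OF fd hB'] mean_tendsto[OF fd hB]])
  have B0: "0 \<le> B" using hB[of 0] norm_ge_zero order_trans by blast
  have t2: "((\<lambda>p. foln (\<lambda>x. h (x + y)) p - foln h p) \<longlongrightarrow> 0) UF"
  proof (rule Lim_null_comparison)
    show "eventually (\<lambda>p. norm (foln (\<lambda>x. h (x + y)) p - foln h p) \<le> 2 * B / real (snd p)) UF"
      using ev_UF1[of y 1]
    proof eventually_elim
      case (elim p)
      then have "y \<in> set (lst (fst p))" using set_lst by auto
      then show ?case using elim fol_shift[of "snd p" h B y] hB unfolding foln_def by simp
    qed
    show "((\<lambda>p. 2 * B / real (snd p)) \<longlongrightarrow> 0) UF"
    proof (rule tendstoI)
      fix e :: real assume e: "e > 0"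
      obtain N0 :: nat where N0: "real N0 > 2 * B / e" using reals_Archimedean2 by blast
      show "eventually (\<lambda>p. dist (2 * B / real (snd p)) 0 < e) UF"
        using ev_UF0[of "Suc N0"]
      proof eventually_elim
        case (elim p)
        then have sp: "real (snd p) > 2 * B / e" using N0 by linarith
        have "2 * B / real (snd p) < e"
        proof (cases "B = 0")
          case True then show ?thesis using e by simp
        next
          case False
          then have "B > 0" using B0 by simp
          have "real (snd p) > 0" using elim by simp
          then show ?thesis using sp e \<open>B > 0\<close> by (simp add: field_simps)
        qed
        then show ?case using B0 by simp
      qed
    qed
  qed
  have "mean (\<lambda>x. h (x + y)) - mean h = 0" using tendsto_unique[OF UF(3) t1 t2] .
  then show ?thesis by simp
qed

lemma additive_bounded_linear:
  fixes f :: "'a::real_normed_vector \<Rightarrow> 'b::real_normed_vector"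
  assumes add: "\<And>x y. f (x + y) = f x + f y" and bnd: "\<And>x. norm (f x) \<le> C * norm x" and C: "0 \<le> C"
  shows "linear f"
proof -
  have f0: "f 0 = 0" using add[of 0 0] by simp
  have fneg: "f (- x) = - f x" for x
  proof -
    have "f x + f (- x) = 0" using add[of x "-x"] f0 by simp
    then show ?thesis by (simp add: add_eq_0_iff)
  qed
  have fnat: "f (real n *\<^sub>R x) = real n *\<^sub>R f x" for n x
    by (induction n) (simp_all add: f0 add algebra_simps)
  have fint: "f (real_of_int k *\<^sub>R x) = real_of_int k *\<^sub>R f x" for k x
  proof (cases "k \<ge> 0")
    case True
    then show ?thesis using fnat[of "nat k" x] by simp
  next
    case False
    then have "real_of_int k = - real (nat (-k))" by simp
    then show ?thesis using fnat[of "nat (-k)" x] fneg by (simp del: of_nat_nat)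
  qed
  have finv: "f ((1 / real n) *\<^sub>R x) = (1 / real n) *\<^sub>R f x" if "n > 0" for n x
  proof -
    have "f x = f (real n *\<^sub>R ((1 / real n) *\<^sub>R x))" using that by simp
    also have "\<dots> = real n *\<^sub>R f ((1 / real n) *\<^sub>R x)" by (rule fnat)
    finally show ?thesis using that by simp
  qed
  have frat: "f (q *\<^sub>R x) = q *\<^sub>R f x" if "q \<in> \<rat>" for q x
  proof -
    obtain k b :: int where b: "b > 0" and qk: "q = real_of_int k / real_of_int b"
      using \<open>q \<in> \<rat>\<close> Rats_cases' by blast
    define n where "n = nat b"
    have n: "n > 0" using b n_def by simp
    have q: "q = real_of_int k / real n" using qk b n_def by simp
    have "q *\<^sub>R x = real_of_int k *\<^sub>R ((1 / real n) *\<^sub>R x)" using q by simp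
    then have "f (q *\<^sub>R x) = f (real_of_int k *\<^sub>R ((1 / real n) *\<^sub>R x))" by (rule arg_cong)
    also have "\<dots> = real_of_int k *\<^sub>R f ((1 / real n) *\<^sub>R x)" by (rule fint)
    also have "\<dots> = real_of_int k *\<^sub>R ((1 / real n) *\<^sub>R f x)" by (simp only: finv[OF n])
    finally have "f (q *\<^sub>R x) = real_of_int k *\<^sub>R ((1 / real n) *\<^sub>R f x)" .
    then show ?thesis using q by simp
  qed
  have fscale: "f (r *\<^sub>R x) = r *\<^sub>R f x" for r x
  proof -
    define a where "a = norm (f (r *\<^sub>R x) - r *\<^sub>R f x)"
    define K where "K = C * norm x + norm (f x)"
    have K0: "0 \<le> K" unfolding K_def using C by simp
    have aeps: "a \<le> e * K" if e: "e > 0" for e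
    proof -
      obtain q where q: "q \<in> \<rat>" "r < q" "q < r + e" using Rats_dense_in_real[of r "r + e"] e by auto
      have "q *\<^sub>R x = r *\<^sub>R x + (q - r) *\<^sub>R x" by (simp add: algebra_simps)
      then have "f (q *\<^sub>R x) = f (r *\<^sub>R x) + f ((q - r) *\<^sub>R x)" using add by metis
      then have "f (r *\<^sub>R x) - r *\<^sub>R f x = (q - r) *\<^sub>R f x - f ((q - r) *\<^sub>R x)"
        using frat[OF q(1)] by (simp add: algebra_simps)
      then have "a \<le> norm ((q - r) *\<^sub>R f x) + norm (f ((q - r) *\<^sub>R x))"
        unfolding a_def by (metis norm_triangle_ineq4)
      also have "\<dots> \<le> (q - r) * norm (f x) + C * ((q - r) * norm x)"
        using bnd[of "(q - r) *\<^sub>R x"] q by simp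
      also have "\<dots> \<le> e * norm (f x) + C * (e * norm x)"
        using q C by (intro add_mono mult_right_mono mult_left_mono) auto
      finally show ?thesis unfolding K_def by (simp add: algebra_simps)
    qed
    have "a \<le> 0"
    proof (rule ccontr)
      assume "\<not> a \<le> 0"
      then have apos: "a > 0" by simp
      have "a \<le> (a / (K + 1)) * K" using aeps[of "a / (K + 1)"] apos K0 by simp
      also have "\<dots> < a" using apos K0 by (simp add: field_simps)
      finally show False by simp
    qed
    then show ?thesis unfolding a_def by simp
  qed
  show ?thesis by (rule linearI) (simp_all add: add fscale)
qed

lemma PC_from_LE:
  fixes V :: "'v::real_normed_vector itself" and W :: "'w::real_normed_vector itself"
  assumes fd: "\<exists>B :: 'v set. finite B \<and> span B = UNIV"
    and adm: "LE_admissible (\<lambda>(Z::nat set) \<rho>. finite Z) c TYPE('v)"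
    and c: "0 \<le> c"
  shows "PC_admissible W c V"
  unfolding PC_admissible_def
proof (intro allI impI, elim conjE)
  fix T :: "'v \<Rightarrow> 'w"
  assume lin: "linear T" and iso: "\<forall>v. norm (T v) = norm v"
  have Tdiff: "T u - T v = T (u - v)" for u v using lin by (simp add: linear_diff)
  have Tadd: "T (u + v) = T u + T v" for u v using lin by (simp add: linear_add)
  have inj: "inj T"
  proof (rule injI)
    fix u v assume "T u = T v"
    then have "norm (T (u - v)) = 0" using Tdiff by (metis diff_self norm_zero)
    then show "u = v" using iso by simp
  qed
  have M: "Metric_space (UNIV :: 'w set) dist"
    by unfold_locales (auto simp: dist_commute intro: dist_triangle)
  have lipf: "\<forall>x\<in>range T. \<forall>y\<in>range T. norm (inv T x - inv T y) \<le> 1 * dist x y"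
  proof (intro ballI)
    fix x y assume "x \<in> range T" "y \<in> range T"
    then obtain u v where "x = T u" "y = T v" by blast
    then show "norm (inv T x - inv T y) \<le> 1 * dist x y"
      using inj iso Tdiff by (simp add: dist_norm)
  qed
  obtain g :: "'w \<Rightarrow> 'v" where gT: "\<forall>x\<in>range T. g x = inv T x"
    and glip: "\<forall>x\<in>UNIV. \<forall>y\<in>UNIV. norm (g x - g y) \<le> c * 1 * dist x y"
    using arb_ext[OF fd adm c M subset_UNIV zero_le_one lipf] by blast
  have gTu: "g (T u) = u" for u using gT inj by simp
  have glip': "norm (g x - g y) \<le> c * norm (x - y)" for x y using glip by (simp add: dist_norm)
  define g1 where "g1 = (\<lambda>y. mean (\<lambda>u::'v. g (y + T u) - u))"
  have b1: "norm (g (y + T u) - u) \<le> c * norm y" for y u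
    using glip'[of "y + T u" "T u"] gTu[of u] by simp
  have g1eq: "g1 (y + T u0) = g1 y + u0" for y u0
  proof -
    define H where "H = (\<lambda>u. g (y + T u) - u)"
    have "(\<lambda>u. g (y + T u0 + T u) - u) = (\<lambda>u. H (u + u0) + u0)"
      by (rule ext) (simp add: H_def Tadd algebra_simps)
    then have "g1 (y + T u0) = mean (\<lambda>u. H (u + u0) + u0)" unfolding g1_def by simp
    also have "\<dots> = mean (\<lambda>u. H (u + u0)) + mean (\<lambda>_::'v. u0)"
      by (rule mean_add[OF fd]) (auto simp: H_def intro: b1 order_refl)
    also have "\<dots> = mean H + u0"
    proof -
      have "mean (\<lambda>u. H (u + u0)) = mean H" by (rule mean_shift[OF fd, of H "c * norm y"]) (simp add: H_def b1)
      then show ?thesis by (simp add: mean_const)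
    qed
    also have "\<dots> = g1 y + u0" by (simp add: H_def g1_def)
    finally show ?thesis .
  qed
  have g1T: "g1 (T u) = u" for u
  proof -
    have "g1 0 = 0" unfolding g1_def using gTu by (simp add: mean_const)
    then show ?thesis using g1eq[of 0 u] by simp
  qed
  have g1lip: "norm (g1 y - g1 y') \<le> c * norm (y - y')" for y y'
  proof -
    have "g1 y - g1 y' = mean (\<lambda>u. (g (y + T u) - u) - (g (y' + T u) - u))"
      unfolding g1_def by (rule mean_diff[OF fd, symmetric]) (rule b1)+
    also have "norm \<dots> \<le> c * norm (y - y')"
    proof (rule mean_norm[OF fd])
      fix u show "norm ((g (y + T u) - u) - (g (y' + T u) - u)) \<le> c * norm (y - y')"
        using glip'[of "y + T u" "y' + T u"] by simp
    qed
    finally show ?thesis .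
  qed
  define P' where "P' = (\<lambda>w. mean (\<lambda>z::'w. g1 (z + w) - g1 z))"
  have b2: "norm (g1 (z + w) - g1 z) \<le> c * norm w" for z w using g1lip[of "z + w" z] by simp
  have P'add: "P' (w1 + w2) = P' w1 + P' w2" for w1 w2
  proof -
    define K where "K = (\<lambda>z. g1 (z + w2) - g1 z)"
    have "(\<lambda>z. g1 (z + (w1 + w2)) - g1 z) = (\<lambda>z. K (z + w1) + (g1 (z + w1) - g1 z))"
      by (rule ext) (simp add: K_def algebra_simps)
    then have "P' (w1 + w2) = mean (\<lambda>z. K (z + w1) + (g1 (z + w1) - g1 z))" unfolding P'_def by simp
    also have "\<dots> = mean (\<lambda>z. K (z + w1)) + mean (\<lambda>z. g1 (z + w1) - g1 z)"
      by (rule mean_add[OF fd]) (auto simp: K_def intro: b2)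
    also have "\<dots> = P' w2 + P' w1"
    proof -
      have "mean (\<lambda>z. K (z + w1)) = mean K" by (rule mean_shift[OF fd, of K "c * norm w2"]) (simp add: K_def b2)
      moreover have "mean K = P' w2" unfolding K_def P'_def by (rule refl)
      moreover have "mean (\<lambda>z. g1 (z + w1) - g1 z) = P' w1" unfolding P'_def by (rule refl)
      ultimately show ?thesis by (simp only:)
    qed
    finally show ?thesis by simp
  qed
  have P'T: "P' (T u) = u" for u
    unfolding P'_def using g1eq by (simp add: mean_const)
  have P'b: "norm (P' w) \<le> c * norm w" for w
    unfolding P'_def by (rule mean_norm[OF fd]) (rule b2)
  have linP': "linear P'" by (rule additive_bounded_linear[OF P'add P'b c])
  define P where "P = T \<circ> P'"
  have "linear P" unfolding P_def using lin linP' by (rule linear_compose[rotated])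
  moreover have "range P = range T"
  proof
    show "range P \<subseteq> range T" unfolding P_def by auto
    show "range T \<subseteq> range P"
    proof
      fix x assume "x \<in> range T"
      then obtain u where "x = T u" by blast
      then have "x = P (T u)" unfolding P_def using P'T by simp
      then show "x \<in> range P" by blast
    qed
  qed
  moreover have "\<forall>w. P (P w) = P w" unfolding P_def using P'T by simp
  moreover have "\<forall>w. norm (P w) \<le> c * norm w" unfolding P_def using iso P'b by simp
  ultimately show "\<exists>P. linear P \<and> range P = range T \<and> (\<forall>w. P (P w) = P w) \<and> (\<forall>w. norm (P w) \<le> c * norm w)"
    by blast
qed

definition lin_on :: "'v::real_vector set \<Rightarrow> ('v \<Rightarrow> real) \<Rightarrow> bool" where
  "lin_on M \<psi> \<longleftrightarrow> (\<forall>x\<in>M. \<forall>y\<in>M. \<psi> (x + y) = \<psi> x + \<psi> y) \<and> (\<forall>x\<in>M. \<forall>a. \<psi> (a *\<^sub>R x) = a * \<psi> x)"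

lemma hb_alpha:
  fixes M :: "'v::real_normed_vector set"
  assumes sub: "subspace M" and lin: "lin_on M \<psi>" and dom: "\<forall>m\<in>M. \<psi> m \<le> norm m"
  shows "\<exists>\<alpha>. (\<forall>m\<in>M. \<psi> m - norm (m - u) \<le> \<alpha>) \<and> (\<forall>m\<in>M. \<alpha> \<le> norm (m + u) - \<psi> m)"
proof -
  have key: "\<psi> m1 - norm (m1 - u) \<le> norm (m + u) - \<psi> m" if "m1 \<in> M" "m \<in> M" for m1 m
  proof -
    have "\<psi> m1 + \<psi> m = \<psi> (m1 + m)" using lin that unfolding lin_on_def by simp
    also have "\<dots> \<le> norm (m1 + m)" using dom sub that by (simp add: subspace_add)
    also have "\<dots> = norm ((m1 - u) + (m + u))" by (simp add: algebra_simps)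
    also have "\<dots> \<le> norm (m1 - u) + norm (m + u)" by (rule norm_triangle_ineq)
    finally show ?thesis by simp
  qed
  define A where "A = (\<lambda>m. \<psi> m - norm (m - u)) ` M"
  have 0: "0 \<in> M" using sub by (simp add: subspace_0)
  have Ane: "A \<noteq> {}" using 0 A_def by blast
  have Abdd: "bdd_above A" unfolding A_def using key[OF _ 0] by (intro bdd_aboveI[of _ "norm (0 + u) - \<psi> 0"]) auto
  show ?thesis
  proof (intro exI[of _ "Sup A"] conjI ballI)
    fix m assume "m \<in> M"
    then show "\<psi> m - norm (m - u) \<le> Sup A" unfolding A_def using Abdd A_def by (intro cSup_upper) auto
  next
    fix m assume m: "m \<in> M"
    show "Sup A \<le> norm (m + u) - \<psi> m" using Ane by (rule cSup_least) (use key m A_def in auto)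
  qed
qed

lemma hb_step:
  fixes M :: "'v::real_normed_vector set"
  assumes sub: "subspace M" and lin: "lin_on M \<psi>" and dom: "\<forall>m\<in>M. \<psi> m \<le> norm m" and u: "u \<notin> M"
    and a1: "\<forall>m\<in>M. \<psi> m - norm (m - u) \<le> \<alpha>" and a2: "\<forall>m\<in>M. \<alpha> \<le> norm (m + u) - \<psi> m"
  shows "\<exists>\<psi>'. lin_on (span (insert u M)) \<psi>' \<and> (\<forall>x\<in>span (insert u M). \<psi>' x \<le> norm x) \<and> \<psi>' u = \<alpha>
    \<and> (\<forall>m\<in>M. \<psi>' m = \<psi> m)"
proof -
  have spanM: "span M = M" using sub by (simp add: span_eq_iff)
  have mem: "x \<in> span (insert u M) \<longleftrightarrow> (\<exists>k. x - k *\<^sub>R u \<in> M)" for x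
    using span_breakdown_eq[of x u M] spanM by simp
  have uniq: "t1 = t2" if "x - t1 *\<^sub>R u \<in> M" "x - t2 *\<^sub>R u \<in> M" for x t1 t2
  proof (rule ccontr)
    assume ne: "t1 \<noteq> t2"
    have "(x - t1 *\<^sub>R u) - (x - t2 *\<^sub>R u) \<in> M" using that sub by (rule_tac subspace_diff) auto
    then have "(t2 - t1) *\<^sub>R u \<in> M" by (simp add: algebra_simps)
    from subspace_scale[OF sub this] have "(1 / (t2 - t1)) *\<^sub>R ((t2 - t1) *\<^sub>R u) \<in> M" .
    then have "u \<in> M" using ne by simp
    then show False using u by simp
  qed
  define \<tau> where "\<tau> = (\<lambda>x. THE t. x - t *\<^sub>R u \<in> M)"
  have \<tau>: "\<tau> x = t" if "x - t *\<^sub>R u \<in> M" for x t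
    unfolding \<tau>_def using that uniq by (intro the_equality) auto
  have \<tau>M: "x - \<tau> x *\<^sub>R u \<in> M" if "x \<in> span (insert u M)" for x
    using that mem \<tau> by metis
  define \<psi>' where "\<psi>' = (\<lambda>x. \<psi> (x - \<tau> x *\<^sub>R u) + \<tau> x * \<alpha>)"
  have psi0: "\<psi> 0 = 0" using lin sub unfolding lin_on_def by (metis mult_zero_left scaleR_zero_left subspace_0)
  have dom_ext: "\<psi> m + t * \<alpha> \<le> norm (m + t *\<^sub>R u)" if m: "m \<in> M" for m t
  proof -
    consider "t = 0" | "t > 0" | "t < 0" by linarith
    then show ?thesis
    proof cases
      case 1 then show ?thesis using dom m by simp
    next
      case 2
      have mt: "(1 / t) *\<^sub>R m \<in> M" using sub m by (simp add: subspace_scale)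
      have "\<alpha> \<le> norm ((1 / t) *\<^sub>R m + u) - \<psi> ((1 / t) *\<^sub>R m)" using a2 mt by blast
      also have "(1 / t) *\<^sub>R m + u = (1 / t) *\<^sub>R (m + t *\<^sub>R u)" using 2 by (simp add: algebra_simps)
      also have "\<psi> ((1 / t) *\<^sub>R m) = (1 / t) * \<psi> m" using lin m unfolding lin_on_def by blast
      finally have "\<alpha> \<le> (1 / t) * norm (m + t *\<^sub>R u) - (1 / t) * \<psi> m" using 2 by simp
      then have "t * \<alpha> \<le> t * ((1 / t) * norm (m + t *\<^sub>R u) - (1 / t) * \<psi> m)"
        using 2 by (simp add: mult_left_mono)
      then show ?thesis using 2 by (simp add: algebra_simps)
    next
      case 3
      define s where "s = - t"
      have s: "s > 0" using 3 s_def by simp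
      have ms: "(1 / s) *\<^sub>R m \<in> M" using sub m by (simp add: subspace_scale)
      have "\<psi> ((1 / s) *\<^sub>R m) - norm ((1 / s) *\<^sub>R m - u) \<le> \<alpha>" using a1 ms by blast
      also have "(1 / s) *\<^sub>R m - u = (1 / s) *\<^sub>R (m - s *\<^sub>R u)" using s by (simp add: algebra_simps)
      also have "\<psi> ((1 / s) *\<^sub>R m) = (1 / s) * \<psi> m" using lin m unfolding lin_on_def by blast
      finally have "(1 / s) * \<psi> m - (1 / s) * norm (m - s *\<^sub>R u) \<le> \<alpha>" using s by simp
      then have "s * ((1 / s) * \<psi> m - (1 / s) * norm (m - s *\<^sub>R u)) \<le> s * \<alpha>"
        using s by (simp add: mult_left_mono)
      then have "\<psi> m - norm (m - s *\<^sub>R u) \<le> s * \<alpha>" using s by (simp add: algebra_simps)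
      then show ?thesis unfolding s_def by (simp add: algebra_simps)
    qed
  qed
  have "lin_on (span (insert u M)) \<psi>'"
    unfolding lin_on_def
  proof (intro conjI ballI allI)
    fix x y assume x: "x \<in> span (insert u M)" and y: "y \<in> span (insert u M)"
    have mx: "x - \<tau> x *\<^sub>R u \<in> M" and my: "y - \<tau> y *\<^sub>R u \<in> M" using \<tau>M x y by auto
    have exy: "(x + y) - (\<tau> x + \<tau> y) *\<^sub>R u = (x - \<tau> x *\<^sub>R u) + (y - \<tau> y *\<^sub>R u)" by (simp add: algebra_simps)
    moreover have "(x + y) - (\<tau> x + \<tau> y) *\<^sub>R u \<in> M" unfolding exy by (rule subspace_add[OF sub mx my])
    ultimately have t: "\<tau> (x + y) = \<tau> x + \<tau> y" and d: "(x + y) - \<tau> (x + y) *\<^sub>R u = (x - \<tau> x *\<^sub>R u) + (y - \<tau> y *\<^sub>R u)"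
      using \<tau> by auto
    have "\<psi> ((x - \<tau> x *\<^sub>R u) + (y - \<tau> y *\<^sub>R u)) = \<psi> (x - \<tau> x *\<^sub>R u) + \<psi> (y - \<tau> y *\<^sub>R u)"
      using lin mx my unfolding lin_on_def by blast
    then show "\<psi>' (x + y) = \<psi>' x + \<psi>' y"
      unfolding \<psi>'_def d by (simp only: t distrib_right add_ac)
  next
    fix x a assume x: "x \<in> span (insert u M)"
    have mx: "x - \<tau> x *\<^sub>R u \<in> M" using \<tau>M x by auto
    have eax: "a *\<^sub>R x - (a * \<tau> x) *\<^sub>R u = a *\<^sub>R (x - \<tau> x *\<^sub>R u)" by (simp add: algebra_simps)
    have mem2: "a *\<^sub>R x - (a * \<tau> x) *\<^sub>R u \<in> M" unfolding eax by (rule subspace_scale[OF sub mx])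
    have t: "\<tau> (a *\<^sub>R x) = a * \<tau> x" by (rule \<tau>[OF mem2])
    have d: "a *\<^sub>R x - \<tau> (a *\<^sub>R x) *\<^sub>R u = a *\<^sub>R (x - \<tau> x *\<^sub>R u)" unfolding t by (rule eax)
    have "\<psi> (a *\<^sub>R (x - \<tau> x *\<^sub>R u)) = a * \<psi> (x - \<tau> x *\<^sub>R u)"
      using lin mx unfolding lin_on_def by blast
    then show "\<psi>' (a *\<^sub>R x) = a * \<psi>' x"
      unfolding \<psi>'_def d by (simp only: t distrib_left mult.assoc)
  qed
  moreover have "\<forall>x\<in>span (insert u M). \<psi>' x \<le> norm x"
  proof
    fix x assume x: "x \<in> span (insert u M)"
    have "\<psi>' x = \<psi> (x - \<tau> x *\<^sub>R u) + \<tau> x * \<alpha>" by (simp add: \<psi>'_def)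
    also have "\<dots> \<le> norm ((x - \<tau> x *\<^sub>R u) + \<tau> x *\<^sub>R u)" by (rule dom_ext[OF \<tau>M[OF x]])
    finally show "\<psi>' x \<le> norm x" by simp
  qed
  moreover have "\<psi>' u = \<alpha>"
  proof -
    have "\<tau> u = 1" using \<tau>[of u 1] sub by (simp add: subspace_0)
    then show ?thesis unfolding \<psi>'_def using psi0 by simp
  qed
  moreover have "\<forall>m\<in>M. \<psi>' m = \<psi> m"
  proof
    fix m assume "m \<in> M"
    then have "\<tau> m = 0" using \<tau>[of m 0] by simp
    then show "\<psi>' m = \<psi> m" unfolding \<psi>'_def by simp
  qed
  ultimately show ?thesis by blast
qed

lemma hb_finite:
  fixes v :: "'v::real_normed_vector"
  assumes "finite A" "v \<noteq> 0"
  shows "\<exists>\<psi>. lin_on (span (insert v A)) \<psi> \<and> (\<forall>x\<in>span (insert v A). \<psi> x \<le> norm x) \<and> \<psi> v = norm v"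
  using assms(1)
proof (induction A rule: finite_induct)
  case empty
  have sub: "subspace {0::'v}" by (simp add: subspace_def)
  have lin: "lin_on {0::'v} (\<lambda>_. 0)" unfolding lin_on_def by simp
  have "\<exists>\<psi>'. lin_on (span (insert v {0})) \<psi>' \<and> (\<forall>x\<in>span (insert v {0}). \<psi>' x \<le> norm x) \<and> \<psi>' v = norm v
       \<and> (\<forall>m\<in>{0}. \<psi>' m = (\<lambda>_. 0) m)"
    by (rule hb_step[OF sub lin]) (use assms(2) in auto)
  moreover have "span (insert v {0}) = span {v}" by (metis insert_commute span_insert_0)
  ultimately show ?case by auto
next
  case (insert a A)
  then obtain \<psi> where lin: "lin_on (span (insert v A)) \<psi>" and dom: "\<forall>x\<in>span (insert v A). \<psi> x \<le> norm x"
    and pv: "\<psi> v = norm v" by blast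
  have eq: "insert v (insert a A) = insert a (insert v A)" by auto
  show ?case
  proof (cases "a \<in> span (insert v A)")
    case True
    then have "span (insert v (insert a A)) = span (insert v A)" unfolding eq by (rule span_redundant)
    then show ?thesis using lin dom pv by auto
  next
    case False
    have sub: "subspace (span (insert v A))" by (rule subspace_span)
    obtain \<alpha> where a1: "\<forall>m\<in>span (insert v A). \<psi> m - norm (m - a) \<le> \<alpha>"
      and a2: "\<forall>m\<in>span (insert v A). \<alpha> \<le> norm (m + a) - \<psi> m"
      using hb_alpha[OF sub lin dom] by blast
    obtain \<psi>' where lin': "lin_on (span (insert a (span (insert v A)))) \<psi>'"
      and dom': "\<forall>x\<in>span (insert a (span (insert v A))). \<psi>' x \<le> norm x"
      and ext: "\<forall>m\<in>span (insert v A). \<psi>' m = \<psi> m"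
      using hb_step[OF sub lin dom False a1 a2] by blast
    have sp: "span (insert a (span (insert v A))) = span (insert v (insert a A))"
      unfolding eq span_insert[of a "span (insert v A)"] span_insert[of a "insert v A"] span_span ..
    have "\<psi>' v = norm v" using ext pv by (simp add: span_base)
    then show ?thesis using lin' dom' sp by auto
  qed
qed

lemma norming_functional:
  fixes v :: "'v::real_normed_vector"
  assumes fd: "\<exists>B :: 'v set. finite B \<and> span B = UNIV"
  shows "\<exists>\<phi>. linear \<phi> \<and> (\<forall>x. \<bar>\<phi> x\<bar> \<le> norm x) \<and> \<phi> v = norm v"
proof (cases "v = 0")
  case True
  then show ?thesis by (intro exI[of _ "\<lambda>_. 0"]) (simp add: linear_zero)
next
  case False
  obtain B :: "'v set" where B: "finite B" "span B = UNIV" using fd by blast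
  obtain \<psi> where lin: "lin_on (span (insert v B)) \<psi>" and dom: "\<forall>x\<in>span (insert v B). \<psi> x \<le> norm x"
    and pv: "\<psi> v = norm v" using hb_finite[OF B(1) False] by blast
  have sp: "span (insert v B) = UNIV" using B(2) span_mono[of B "insert v B"] by auto
  have add: "\<psi> (x + y) = \<psi> x + \<psi> y" and sc: "\<psi> (a *\<^sub>R x) = a * \<psi> x" for x y a
    using lin unfolding lin_on_def sp by auto
  have linear: "linear \<psi>" by (rule linearI) (simp_all add: add sc)
  have "\<bar>\<psi> x\<bar> \<le> norm x" for x
  proof -
    have "\<psi> x \<le> norm x" using dom sp by auto
    moreover have "\<psi> (- x) \<le> norm (- x)" using dom sp by blast
    moreover have "\<psi> (- x) = - \<psi> x" using sc[of "-1" x] by simp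
    ultimately show ?thesis by simp
  qed
  then show ?thesis using linear pv by blast
qed

lemma countable_dense_fd:
  fixes V :: "'v::real_normed_vector itself"
  assumes fd: "\<exists>B :: 'v set. finite B \<and> span B = UNIV"
  shows "\<exists>D :: 'v set. countable D \<and> D \<noteq> {} \<and> (\<forall>v. \<forall>e>0. \<exists>d\<in>D. norm (v - d) < e)"
proof -
  obtain B :: "'v set" where B: "finite B" "span B = UNIV" using fd by blast
  define D where "D = (\<lambda>q. \<Sum>b\<in>B. q b *\<^sub>R b) ` (PiE B (\<lambda>_. \<rat>))"
  have "countable D" unfolding D_def using B(1) countable_rat by (intro countable_image countable_PiE) auto
  moreover have "D \<noteq> {}"
  proof -
    have "(\<lambda>b\<in>B. 0) \<in> PiE B (\<lambda>_. \<rat>)" by simp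
    then show ?thesis unfolding D_def by blast
  qed
  moreover have "\<exists>d\<in>D. norm (v - d) < e" if e: "e > 0" for v e
  proof -
    have "v \<in> range (\<lambda>u. \<Sum>b\<in>B. u b *\<^sub>R b)" using span_finite[OF B(1)] B(2) by simp
    then obtain u where u: "v = (\<Sum>b\<in>B. u b *\<^sub>R b)" by blast
    define S where "S = (\<Sum>b\<in>B. norm b)"
    have S0: "S \<ge> 0" unfolding S_def by (simp add: sum_nonneg)
    define \<delta> where "\<delta> = e / (S + 1)"
    have \<delta>: "\<delta> > 0" unfolding \<delta>_def using e S0 by simp
    have "\<forall>b. \<exists>r. r \<in> \<rat> \<and> u b - \<delta> < r \<and> r < u b + \<delta>"
    proof
      fix b
      have "u b - \<delta> < u b + \<delta>" using \<delta> by simp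
      from Rats_dense_in_real[OF this] show "\<exists>r. r \<in> \<rat> \<and> u b - \<delta> < r \<and> r < u b + \<delta>" by blast
    qed
    from choice[OF this] obtain r where r: "\<And>b. r b \<in> \<rat> \<and> u b - \<delta> < r b \<and> r b < u b + \<delta>" by blast
    define q where "q = restrict r B"
    have qP: "q \<in> PiE B (\<lambda>_. \<rat>)" unfolding q_def using r by auto
    have qD: "(\<Sum>b\<in>B. q b *\<^sub>R b) \<in> D" unfolding D_def using qP by (rule imageI)
    have "v - (\<Sum>b\<in>B. q b *\<^sub>R b) = (\<Sum>b\<in>B. (u b - r b) *\<^sub>R b)"
      unfolding u q_def by (simp add: sum_subtractf[symmetric] scaleR_diff_left)
    then have "norm (v - (\<Sum>b\<in>B. q b *\<^sub>R b)) \<le> (\<Sum>b\<in>B. norm ((u b - r b) *\<^sub>R b))"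
      by (simp only: norm_sum)
    also have "\<dots> = (\<Sum>b\<in>B. \<bar>u b - r b\<bar> * norm b)" by simp
    also have "\<dots> \<le> (\<Sum>b\<in>B. \<delta> * norm b)"
    proof (rule sum_mono)
      fix b
      have "\<bar>u b - r b\<bar> \<le> \<delta>" using r[of b] by linarith
      then show "\<bar>u b - r b\<bar> * norm b \<le> \<delta> * norm b" by (rule mult_right_mono) simp
    qed
    also have "\<dots> = \<delta> * S" unfolding S_def by (simp add: sum_distrib_left)
    also have "\<dots> < e" unfolding \<delta>_def using e S0 by (simp add: field_simps)
    finally show ?thesis using qD by blast
  qed
  ultimately show ?thesis by blast
qed

lemma embed_linf:
  fixes V :: "'v::real_normed_vector itself"
  assumes fd: "\<exists>B :: 'v set. finite B \<and> span B = UNIV"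
  shows "\<exists>T :: 'v \<Rightarrow> (nat \<Rightarrow>\<^sub>C real). linear T \<and> (\<forall>v. norm (T v) = norm v)"
proof -
  obtain D :: "'v set" where D: "countable D" "D \<noteq> {}" "\<forall>v. \<forall>e>0. \<exists>d\<in>D. norm (v - d) < e"
    using countable_dense_fd[OF fd] by blast
  define e where "e = from_nat_into D"
  have rng: "range e = D" unfolding e_def using D by simp
  define \<phi> where "\<phi> = (\<lambda>k. SOME \<phi>. linear \<phi> \<and> (\<forall>x. \<bar>\<phi> x\<bar> \<le> norm x) \<and> \<phi> (e k) = norm (e k))"
  have \<phi>: "linear (\<phi> k) \<and> (\<forall>x. \<bar>\<phi> k x\<bar> \<le> norm x) \<and> \<phi> k (e k) = norm (e k)" for k
  proof -
    have "\<exists>\<phi>. linear \<phi> \<and> (\<forall>x. \<bar>\<phi> x\<bar> \<le> norm x) \<and> \<phi> (e k) = norm (e k)"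
      by (rule norming_functional[OF fd])
    from someI_ex[OF this] show ?thesis unfolding \<phi>_def .
  qed
  have inb: "(\<lambda>k. \<phi> k v) \<in> bcontfun" for v
    by (rule bcontfun_normI[of _ "norm v"]) (use \<phi> in auto)
  define T where "T = (\<lambda>v. Bcontfun (\<lambda>k. \<phi> k v))"
  have Tapp: "apply_bcontfun (T v) k = \<phi> k v" for v k unfolding T_def using Bcontfun_inverse[OF inb[of v]] by simp
  have "linear T"
  proof (rule linearI)
    fix x y show "T (x + y) = T x + T y"
      by (rule bcontfun_eqI) (simp add: Tapp linear_add[OF \<phi>[THEN conjunct1]])
  next
    fix a x show "T (a *\<^sub>R x) = a *\<^sub>R T x"
      by (rule bcontfun_eqI) (simp add: Tapp linear_scale[OF \<phi>[THEN conjunct1]])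
  qed
  moreover have "norm (T v) = norm v" for v
  proof (rule antisym)
    show "norm (T v) \<le> norm v" by (rule norm_bound) (simp add: Tapp \<phi>)
    show "norm v \<le> norm (T v)"
    proof (rule ccontr)
      assume "\<not> norm v \<le> norm (T v)"
      then have gap: "norm v - norm (T v) > 0" by simp
      define \<epsilon> where "\<epsilon> = (norm v - norm (T v)) / 3"
      have \<epsilon>: "\<epsilon> > 0" using gap \<epsilon>_def by simp
      obtain d where d: "d \<in> D" "norm (v - d) < \<epsilon>" using D(3) \<epsilon> by blast
      obtain k where k: "e k = d" using rng d(1) by blast
      have "\<phi> k v = \<phi> k d + \<phi> k (v - d)" using \<phi>[of k] by (simp add: linear_diff)
      moreover have "\<phi> k d = norm d" using \<phi>[of k] k by simp
      moreover have "\<bar>\<phi> k (v - d)\<bar> \<le> norm (v - d)" using \<phi> by blast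
      moreover have "norm d \<ge> norm v - norm (v - d)" using norm_triangle_sub[of v d] by simp
      ultimately have "\<phi> k v \<ge> norm v - 2 * \<epsilon>" using d(2) by linarith
      moreover have "\<phi> k v \<le> norm (T v)" using norm_bounded[of "T v" k] by (simp add: Tapp)
      ultimately have "norm v - 2 * ((norm v - norm (T v)) / 3) \<le> norm (T v)" unfolding \<epsilon>_def by linarith
      then show False using gap by (simp add: field_simps)
    qed
  qed
  ultimately show ?thesis by blast
qed

lemma LE_from_PC:
  fixes V :: "'v::real_normed_vector itself"
  assumes fd: "\<exists>B :: 'v set. finite B \<and> span B = UNIV"
    and c: "0 \<le> c" and PC: "PC_admissible TYPE(nat \<Rightarrow>\<^sub>C real) c V"
  shows "LE_admissible (\<lambda>(Z::nat set) \<rho>. finite Z) c V"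
proof -
  obtain T :: "'v \<Rightarrow> (nat \<Rightarrow>\<^sub>C real)" where lin: "linear T" and iso: "\<forall>v. norm (T v) = norm v"
    using embed_linf[OF fd] by blast
  have PCa: "\<forall>T :: 'v \<Rightarrow> (nat \<Rightarrow>\<^sub>C real). linear T \<and> (\<forall>v. norm (T v) = norm v) \<longrightarrow>
        (\<exists>P :: (nat \<Rightarrow>\<^sub>C real) \<Rightarrow> (nat \<Rightarrow>\<^sub>C real). linear P \<and> range P = range T \<and> (\<forall>w. P (P w) = P w) \<and>
           (\<forall>w. norm (P w) \<le> c * norm w))"
    using PC unfolding PC_admissible_def .
  obtain P where linP: "linear P" and rP: "range P = range T" and idem: "\<forall>w. P (P w) = P w"
    and nP: "\<forall>w. norm (P w) \<le> c * norm w"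
    using PCa[rule_format, OF conjI[OF lin iso]] by blast
  have PT: "P (T v) = T v" for v
  proof -
    have "T v \<in> range P" using rP by blast
    then obtain w where "T v = P w" by blast
    then show ?thesis using idem by simp
  qed
  have Tdiff: "T u - T v = T (u - v)" for u v using lin by (simp add: linear_diff)
  have inj: "inj T"
  proof (rule injI)
    fix u v assume "T u = T v"
    then have "norm (T (u - v)) = 0" using Tdiff by (metis diff_self norm_zero)
    then show "u = v" using iso by simp
  qed
  show ?thesis
    unfolding LE_admissible_def
  proof (intro allI impI, elim conjE)
    fix Z :: "nat set" and \<rho> X and f :: "nat \<Rightarrow> 'v"
    assume M: "Metric_space Z \<rho>" and fin0: "(\<lambda>(Z::nat set) \<rho>. finite Z) Z \<rho>" and XZ: "X \<subseteq> Z"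
    have fin: "finite Z" using fin0 by simp
    show "\<exists>g. (\<forall>x\<in>X. g x = f x) \<and> lip_const Z \<rho> g \<le> ereal c * lip_const X \<rho> f"
    proof (cases "c = 0")
      case True
      have triv: "v = 0" for v :: 'v
      proof -
        have "norm (T v) \<le> 0" using nP PT[of v] True by (metis mult_zero_left)
        then show ?thesis using iso by simp
      qed
      have "lip_const Z \<rho> f \<le> ereal 0"
        using lip_const_le_metric[OF M order_refl order_refl, of f] triv[of "f _ - f _"] by simp
      then show ?thesis using True by (intro exI[of _ f]) (simp add: zero_ereal_def[symmetric])
    next
      case False
      then have cpos: "c > 0" using c by simp
      show ?thesis
      proof (cases rule: lip_const_finite_cases[of X \<rho> f])
        case 1
        then show ?thesis using cpos by (intro exI[of _ f]) simp
      next
        case (2 L)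
        have L: "0 \<le> L" by fact
        have lipf: "\<forall>x\<in>X. \<forall>y\<in>X. norm (f x - f y) \<le> L * \<rho> x y"
          using lip_const_le_metric[OF M XZ L, of f] 2 by simp
        have "\<exists>g. (\<forall>x\<in>X. g x = f x) \<and> (\<forall>x\<in>Z. \<forall>y\<in>Z. norm (g x - g y) \<le> c * L * \<rho> x y)"
        proof (cases "X = {}")
          case True
          have "\<forall>x\<in>Z. \<forall>y\<in>Z. 0 \<le> c * L * \<rho> x y"
            using Metric_space.nonneg[OF M] c L by (metis mult_nonneg_nonneg)
          then show ?thesis using True by (intro exI[of _ "\<lambda>_. 0"]) simp
        next
          case False
          then obtain x0 where x0: "x0 \<in> X" by blast
          have finX: "finite X" using fin XZ finite_subset by blast
          define h where "h = (\<lambda>k x. apply_bcontfun (T (f x)) k)"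
          have hb: "\<bar>h k x\<bar> \<le> norm (f x)" for k x
            unfolding h_def using norm_bounded[of "T (f x)" k] iso by simp
          have hlip: "h k x - h k y \<le> L * \<rho> x y" if "x \<in> X" "y \<in> X" for k x y
          proof -
            have "h k x - h k y = apply_bcontfun (T (f x) - T (f y)) k" unfolding h_def by simp
            also have "\<dots> \<le> norm (T (f x) - T (f y))" using norm_bounded[of "T (f x) - T (f y)" k] by simp
            also have "\<dots> = norm (f x - f y)" using Tdiff iso by simp
            also have "\<dots> \<le> L * \<rho> x y" using lipf that by blast
            finally show ?thesis .
          qed
          define G where "G = (\<lambda>z k. Min ((\<lambda>x. h k x + L * \<rho> z x) ` X))"
          have G_le: "G z k \<le> h k x + L * \<rho> z x" if "x \<in> X" for z k x
            unfolding G_def using finX that by (intro Min_le) auto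
          have G_ex: "\<exists>x\<in>X. G z k = h k x + L * \<rho> z x" for z k
          proof -
            have "G z k \<in> (\<lambda>x. h k x + L * \<rho> z x) ` X" unfolding G_def using finX False by (intro Min_in) auto
            then show ?thesis by blast
          qed
          have GX: "G z k = h k z" if z: "z \<in> X" for z k
          proof (rule antisym)
            have "\<rho> z z = 0" using M z XZ by (simp add: Metric_space.zero subsetD)
            then show "G z k \<le> h k z" using G_le[OF z, of z k] by simp
          next
            obtain x where x: "x \<in> X" "G z k = h k x + L * \<rho> z x" using G_ex by blast
            have "h k z - h k x \<le> L * \<rho> z x" using hlip[OF z x(1)] .
            then show "h k z \<le> G z k" using x by simp
          qed
          have Glip: "G z k \<le> G z' k + L * \<rho> z z'" if z: "z \<in> Z" "z' \<in> Z" for z z' k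
          proof -
            obtain x where x: "x \<in> X" "G z' k = h k x + L * \<rho> z' x" using G_ex by blast
            have "\<rho> z x \<le> \<rho> z z' + \<rho> z' x" using Metric_space.triangle[OF M] z x(1) XZ by blast
            then have "L * \<rho> z x \<le> L * \<rho> z z' + L * \<rho> z' x" using L by (metis distrib_left mult_left_mono)
            then show ?thesis using G_le[OF x(1), of z k] x(2) by linarith
          qed
          define Bz where "Bz = (\<lambda>z. \<Sum>x\<in>X. norm (f x) + L * \<rho> z x)"
          have Gb: "\<bar>G z k\<bar> \<le> Bz z" for z k
          proof -
            have nn: "0 \<le> norm (f x) + L * \<rho> z x" for x using L Metric_space.nonneg[OF M] by simp
            have up: "G z k \<le> Bz z"
            proof -
              have "G z k \<le> h k x0 + L * \<rho> z x0" by (rule G_le[OF x0])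
              also have "\<dots> \<le> norm (f x0) + L * \<rho> z x0" using hb[of k x0] by simp
              also have "\<dots> \<le> Bz z" unfolding Bz_def using finX x0 nn by (intro member_le_sum) auto
              finally show ?thesis .
            qed
            obtain x where x: "x \<in> X" "G z k = h k x + L * \<rho> z x" using G_ex by blast
            have "- (norm (f x) + L * \<rho> z x) \<le> G z k" using x(2) hb[of k x] nn[of x] L Metric_space.nonneg[OF M, of z x]
              by (smt (verit) mult_nonneg_nonneg)
            moreover have "norm (f x) + L * \<rho> z x \<le> Bz z" unfolding Bz_def using finX x(1) nn by (intro member_le_sum) auto
            ultimately show ?thesis using up by linarith
          qed
          have inG: "G z \<in> bcontfun" for z
            by (rule bcontfun_normI[of _ "Bz z"]) (simp_all add: Gb)
          define Gc where "Gc = (\<lambda>z. Bcontfun (G z))"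
          have Gapp: "apply_bcontfun (Gc z) k = G z k" for z k
            unfolding Gc_def using Bcontfun_inverse[OF inG[of z]] by simp
          have GcX: "Gc z = T (f z)" if "z \<in> X" for z
            by (rule bcontfun_eqI) (simp add: Gapp GX[OF that] h_def)
          have Gclip: "norm (Gc z - Gc z') \<le> L * \<rho> z z'" if "z \<in> Z" "z' \<in> Z" for z z'
          proof (rule norm_bound)
            fix k
            have "G z k - G z' k \<le> L * \<rho> z z'" using Glip[OF that, of k] by simp
            moreover have "G z' k - G z k \<le> L * \<rho> z z'"
              using Glip[OF that(2) that(1), of k] Metric_space.commute[OF M, of z z'] by simp
            ultimately show "norm (apply_bcontfun (Gc z - Gc z') k) \<le> L * \<rho> z z'" by (simp add: Gapp)
          qed
          define g where "g = (\<lambda>z. inv T (P (Gc z)))"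
          have Tg: "T (g z) = P (Gc z)" for z
          proof -
            have "P (Gc z) \<in> range T" using rP by blast
            then show ?thesis unfolding g_def by (simp add: f_inv_into_f)
          qed
          have "\<forall>x\<in>X. g x = f x"
          proof
            fix x assume "x \<in> X"
            then have "P (Gc x) = T (f x)" using GcX PT by simp
            then show "g x = f x" unfolding g_def using inj by simp
          qed
          moreover have "\<forall>x\<in>Z. \<forall>y\<in>Z. norm (g x - g y) \<le> c * L * \<rho> x y"
          proof (intro ballI)
            fix x y assume xy: "x \<in> Z" "y \<in> Z"
            have "norm (g x - g y) = norm (T (g x - g y))" using iso by simp
            also have "T (g x - g y) = P (Gc x - Gc y)" using Tdiff[symmetric] Tg linP by (simp add: linear_diff)
            also have "norm (P (Gc x - Gc y)) \<le> c * norm (Gc x - Gc y)" using nP by blast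
            also have "\<dots> \<le> c * (L * \<rho> x y)" using Gclip[OF xy] c by (rule mult_left_mono)
            finally show "norm (g x - g y) \<le> c * L * \<rho> x y" by (simp add: mult.assoc)
          qed
          ultimately show ?thesis by blast
        qed
        then obtain g where g: "\<forall>x\<in>X. g x = f x" "\<forall>x\<in>Z. \<forall>y\<in>Z. norm (g x - g y) \<le> c * L * \<rho> x y"
          by blast
        have "lip_const Z \<rho> g \<le> ereal (c * L)"
          using lip_const_le_metric[OF M order_refl, of "c * L" g] g(2) c L by simp
        then show ?thesis using g(1) 2 by (intro exI[of _ g]) simp
      qed
    qed
  qed
qed

theorem theorem1p5:
  fixes V :: "'v::banach itself"
  assumes fin_dim: "\<exists>B :: 'v set. finite B \<and> span B = UNIV"
  shows "LE_c V = LE_f V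
       \<and> LE_f V \<le> LE_type TYPE(nat) V
       \<and> LE_type TYPE('z) V \<le> LE_f V
       \<and> PC_type TYPE('w::banach) V \<le> LE_f V
       \<and> LE_f V \<le> PC_type TYPE(nat \<Rightarrow>\<^sub>C real) V"
proof (intro conjI)
  show "LE_c V = LE_f V" using LE_c_le_LE_f[OF fin_dim] LE_f_le_LE_c[of V] by (rule antisym)
  show "LE_f V \<le> LE_type TYPE(nat) V" by (rule LE_f_le_LE_type_nat)
  show "LE_type TYPE('z) V \<le> LE_f V" by (rule LE_type_le_LE_f[OF fin_dim])
  show "PC_type TYPE('w::banach) V \<le> LE_f V"
    unfolding PC_type_def LE_f_def LE_const_on_def
  proof (rule Inf_admissible_mono)
    fix c :: real assume c: "0 \<le> c" and adm: "LE_admissible (\<lambda>(Z::nat set) \<rho>. finite Z) c V"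
    have adm': "LE_admissible (\<lambda>(Z::nat set) \<rho>. finite Z) c TYPE('v)" using adm LE_adm_V by blast
    show "PC_admissible TYPE('w) c V" by (rule PC_from_LE[OF fin_dim adm' c])
  qed
  show "LE_f V \<le> PC_type TYPE(nat \<Rightarrow>\<^sub>C real) V"
    unfolding PC_type_def LE_f_def LE_const_on_def
  proof (rule Inf_admissible_mono)
    fix c :: real assume c: "0 \<le> c" and pc: "PC_admissible TYPE(nat \<Rightarrow>\<^sub>C real) c V"
    show "LE_admissible (\<lambda>(Z::nat set) \<rho>. finite Z) c V" by (rule LE_from_PC[OF fin_dim c pc])
  qed
qed

end
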